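(* Let $\mu,\nu$ be probability measures on $\mathbb{R}^d$ with finite first moments, both equivalent to (i.e. mutually absolutely continuous with) the $d$-dimensional Lebesgue measure $\lambda$. Then \[ \inf_{f\in \mathcal{C}^1(\mathbb{R}^d)}\left(\int f\,d\nu - \int f\,d\mu \right)=\inf_{\rho\in \mathcal{P}^1(\mathbb{R}^d)} \left( C(\nu,\rho)-C(\mu,\rho)\right), \] where $\mathcal{P}^1(\mathbb{R}^d):=\{\rho\in \mathcal{P}(\mathbb{R}^d): \mathrm{supp}(\rho)\subseteq B_1(0)\}$ and $\mathcal{C}^1(\mathbb{R}^d):=\{f:\mathbb{R}^d\to \mathbb{R} \text{ convex}: \|\partial f\|_\infty\le 1\}$.
   Context: $\mathcal{P}(\mathbb{R}^d)$ is the set of Borel probability measures on $\mathbb{R}^d$; $B_1(0)$ is the Euclidean unit ball. For a convex $f$, $\partial f(x):=\{y: f(x')-f(x)\ge\langle y,x'-x\rangle\ \forall x'\}$ is the subdifferential and $\|\partial f\|_\infty:=\sup_{x\in\mathbb{R}^d}\sup_{y\in\partial f(x)}|y|$. For probability measures $\alpha,\rho$, $\Pi(\alpha,\rho)$ is the set of couplings and $C(\alpha,\rho):=\sup_{\pi\in\Pi(\alpha,\rho)}\int\langle x,y\rangle\,\pi(dx,dy)$. *)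

theory Defs
  imports "HOL-Probability.Probability"
begin

definition subdiff :: "('a::real_inner \<Rightarrow> real) \<Rightarrow> 'a \<Rightarrow> 'a set" where
  "subdiff f x = {y. \<forall>x'. f x' - f x \<ge> inner y (x' - x)}"

definition convex_lip1 :: "('a::euclidean_space \<Rightarrow> real) set" where
  "convex_lip1 = {f. convex_on UNIV f \<and> (\<forall>x. \<forall>y\<in>subdiff f x. norm y \<le> 1)}"

definition borel_prob :: "('a::euclidean_space) measure set" where
  "borel_prob = {M. prob_space M \<and> sets M = sets borel}"

definition measure_support :: "('a::metric_space) measure \<Rightarrow> 'a set" where
  "measure_support M = {x. \<forall>e>0. emeasure M (ball x e) > 0}"

definition prob_unit_ball :: "('a::euclidean_space) measure set" where
  "prob_unit_ball = {\<rho>\<in>borel_prob. measure_support \<rho> \<subseteq> cball 0 1}"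

definition couplings :: "'a::euclidean_space measure \<Rightarrow> 'a measure \<Rightarrow> ('a \<times> 'a) measure set" where
  "couplings \<alpha> \<rho> = {\<pi>. prob_space \<pi> \<and> sets \<pi> = sets (borel \<Otimes>\<^sub>M borel)
      \<and> distr \<pi> borel fst = \<alpha> \<and> distr \<pi> borel snd = \<rho>}"

definition corr_cost :: "'a::euclidean_space measure \<Rightarrow> 'a measure \<Rightarrow> real" where
  "corr_cost \<alpha> \<rho> = (SUP \<pi>\<in>couplings \<alpha> \<rho>. integral\<^sup>L \<pi> (\<lambda>(x, y). inner x y))"

end

theory Submission
  imports Defs
begin

lemma subgrad_exists:
  fixes f :: "'a::euclidean_space \<Rightarrow> real"
  assumes cf: "convex_on UNIV f"
  shows "\<exists>y. y \<in> subdiff f x0"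
proof -
  define S where "S = {p - (x0, f x0) | p. f (fst p) < snd p}"
  have "convex S"
    unfolding convex_def
  proof (intro ballI allI impI)
    fix u v :: real and s1 s2
    assume s1: "s1 \<in> S" and s2: "s2 \<in> S" and u0: "0 \<le> u" and v0: "0 \<le> v" and uv: "u + v = 1"
    obtain p where p: "f (fst p) < snd p" "s1 = p - (x0, f x0)" using s1 unfolding S_def by blast
    obtain q where q: "f (fst q) < snd q" "s2 = q - (x0, f x0)" using s2 unfolding S_def by blast
    have u: "0 \<le> u" "0 \<le> v" "u + v = 1" using u0 v0 uv by auto
    have strict: "f (u *\<^sub>R fst p + v *\<^sub>R fst q) < u * snd p + v * snd q"
    proof (cases "u = 0")
      case True then have "v = 1" using u by simp
      then show ?thesis using True q by simp
    next
      case False then have "u > 0" using u by simp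
      have "u * f (fst p) < u * snd p" using \<open>u>0\<close> p by simp
      moreover have "v * f (fst q) \<le> v * snd q" using u q by (intro mult_left_mono) auto
      moreover have "f (u *\<^sub>R fst p + v *\<^sub>R fst q) \<le> u * f (fst p) + v * f (fst q)"
        using cf u by (auto simp: convex_on_def)
      ultimately show ?thesis by linarith
    qed
    have "u *\<^sub>R (x0, f x0) + v *\<^sub>R (x0, f x0) = (x0, f x0)"
      using u by (metis scaleR_add_left scaleR_one)
    then have "u *\<^sub>R s1 + v *\<^sub>R s2 = (u *\<^sub>R p + v *\<^sub>R q) - (x0, f x0)"
    proof -
      have "u *\<^sub>R s1 + v *\<^sub>R s2 = (u *\<^sub>R p + v *\<^sub>R q) - (u *\<^sub>R (x0, f x0) + v *\<^sub>R (x0, f x0))"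
        unfolding p(2) q(2) by (simp only: scaleR_right_diff_distrib) (simp add: algebra_simps)
      then show ?thesis using \<open>u *\<^sub>R (x0, f x0) + v *\<^sub>R (x0, f x0) = (x0, f x0)\<close> by simp
    qed
    moreover have "f (fst (u *\<^sub>R p + v *\<^sub>R q)) < snd (u *\<^sub>R p + v *\<^sub>R q)"
      using strict by simp
    ultimately show "u *\<^sub>R s1 + v *\<^sub>R s2 \<in> S" unfolding S_def by blast
  qed
  moreover have "0 \<notin> S" unfolding S_def by (auto simp: zero_prod_def)
  ultimately obtain a where a: "a \<noteq> 0" "\<forall>s\<in>S. 0 \<le> inner a s"
    using separating_hyperplane_set_0 by blast
  obtain a1 a2 where a12: "a = (a1, a2)" by (cases a)
  have key: "0 \<le> inner a1 (x - x0) + a2 * (t - f x0)" if "f x < t" for x t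
  proof -
    have "(x, t) - (x0, f x0) \<in> S" unfolding S_def using that by force
    then show ?thesis using a(2) a12 by (auto simp: inner_Pair)
  qed
  have "0 \<le> a2" using key[of x0 "f x0 + 1"] by simp
  moreover have "a2 \<noteq> 0"
  proof
    assume "a2 = 0"
    then have "0 \<le> inner a1 ((x0 - a1) - x0)" using key[of "x0 - a1" "f (x0 - a1) + 1"] by simp
    then have "a1 \<bullet> a1 \<le> 0" by simp
    then have "a1 = 0" using inner_gt_zero_iff[of a1] by linarith
    with \<open>a2 = 0\<close> a a12 show False by (simp add: zero_prod_def)
  qed
  ultimately have a2: "a2 > 0" by simp
  have "f x - f x0 \<ge> inner (- (1/a2) *\<^sub>R a1) (x - x0)" for x
  proof -
    have "0 \<le> inner a1 (x - x0) + a2 * (f x + e - f x0)" if "e > 0" for e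
      using key[of x "f x + e"] that by simp
    then have "0 \<le> inner a1 (x - x0) + a2 * (f x - f x0)"
    proof -
      assume h: "\<And>e. e > 0 \<Longrightarrow> 0 \<le> inner a1 (x - x0) + a2 * (f x + e - f x0)"
      show ?thesis
      proof (rule ccontr)
        assume "\<not> ?thesis"
        then have neg: "inner a1 (x - x0) + a2 * (f x - f x0) < 0" by simp
        define e where "e = - (inner a1 (x - x0) + a2 * (f x - f x0)) / (2 * a2)"
        have "e > 0" using neg a2 by (simp add: e_def divide_pos_pos)
        have "a2 * e = - (inner a1 (x - x0) + a2 * (f x - f x0)) / 2"
          using a2 by (simp add: e_def)
        then have "inner a1 (x - x0) + a2 * (f x + e - f x0) < 0"
          using neg by (simp add: algebra_simps)
        with h[OF \<open>e>0\<close>] show False by simp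
      qed
    qed
    then have "- inner a1 (x - x0) / a2 \<le> f x - f x0"
      using a2 by (simp add: field_simps)
    then show ?thesis by (simp add: inner_minus_left)
  qed
  then show ?thesis unfolding subdiff_def by blast
qed

lemma convex_lip1_lipschitz:
  fixes f :: "'a::euclidean_space \<Rightarrow> real"
  assumes "f \<in> convex_lip1"
  shows "\<bar>f x - f x'\<bar> \<le> norm (x - x')"
proof -
  have cf: "convex_on UNIV f" and b: "\<And>x y. y \<in> subdiff f x \<Longrightarrow> norm y \<le> 1"
    using assms by (auto simp: convex_lip1_def)
  have one: "f x - f x' \<le> norm (x - x')" for x x'
  proof -
    obtain y where y: "y \<in> subdiff f x" using subgrad_exists[OF cf] by blast
    have "f x' - f x \<ge> inner y (x' - x)" using y by (auto simp: subdiff_def)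
    moreover have "\<bar>inner y (x' - x)\<bar> \<le> norm y * norm (x' - x)" by (rule Cauchy_Schwarz_ineq2)
    moreover have "norm y * norm (x' - x) \<le> norm (x' - x)"
      using b[OF y] by (simp add: mult_left_le_one_le)
    ultimately show ?thesis by (simp add: norm_minus_commute)
  qed
  show ?thesis using one[of x x'] one[of x' x] by (simp add: norm_minus_commute abs_le_iff)
qed

lemma prob_unit_ball_AE:
  fixes \<rho> :: "'a::euclidean_space measure"
  assumes "\<rho> \<in> prob_unit_ball"
  shows "AE y in \<rho>. norm y \<le> 1"
proof -
  have sets: "sets \<rho> = sets borel" and supp: "measure_support \<rho> \<subseteq> cball 0 1"
    using assms by (auto simp: prob_unit_ball_def borel_prob_def)
  define F where "F = {ball x e | x e. e > 0 \<and> emeasure \<rho> (ball x e) = 0}"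
  obtain F' where F': "F' \<subseteq> F" "countable F'" "\<Union>F' = \<Union>F"
    using Lindelof[of F] unfolding F_def by auto
  have "(\<Union>B\<in>F'. B) \<in> null_sets \<rho>"
  proof (rule null_sets_UN')
    show "countable F'" by fact
    fix B assume "B \<in> F'"
    then obtain x e where "B = ball x e" "emeasure \<rho> (ball x e) = 0" using F' F_def by auto
    then show "B \<in> null_sets \<rho>" using sets by (auto simp: null_sets_def)
  qed
  moreover have "{y. \<not> norm y \<le> 1} \<subseteq> \<Union>F'"
  proof
    fix y :: 'a assume "y \<in> {y. \<not> norm y \<le> 1}"
    then have "y \<notin> measure_support \<rho>" using supp by auto
    then obtain e where "e > 0" "\<not> emeasure \<rho> (ball y e) > 0" unfolding measure_support_def by auto
    then have "ball y e \<in> F" unfolding F_def by (auto simp: zero_less_iff_neq_zero)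
    then show "y \<in> \<Union>F'" using F'(3) \<open>e>0\<close> by (metis UnionI centre_in_ball)
  qed
  ultimately show ?thesis by (intro AE_I'[of "\<Union>F'"]) auto
qed

lemma prob_unit_ball_prob: "\<rho> \<in> prob_unit_ball \<Longrightarrow> prob_space \<rho>"
  and prob_unit_ball_sets: "\<rho> \<in> prob_unit_ball \<Longrightarrow> sets \<rho> = sets borel"
  by (auto simp: prob_unit_ball_def borel_prob_def)

lemma borel_probD: "\<rho> \<in> borel_prob \<Longrightarrow> prob_space \<rho>" "\<rho> \<in> borel_prob \<Longrightarrow> sets \<rho> = sets borel"
  by (auto simp: borel_prob_def)

context
  fixes \<pi> :: "('a::euclidean_space \<times> 'a) measure" and \<alpha> \<rho>
  assumes cp: "\<pi> \<in> couplings \<alpha> \<rho>"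
begin

lemma cp_prob: "prob_space \<pi>" and cp_sets: "sets \<pi> = sets (borel \<Otimes>\<^sub>M borel)"
  and cp_fst: "distr \<pi> borel fst = \<alpha>" and cp_snd: "distr \<pi> borel snd = \<rho>"
  using cp by (auto simp: couplings_def)

lemma cp_meas: "measurable \<pi> = measurable (borel \<Otimes>\<^sub>M borel)"
  using cp_sets by (intro ext measurable_cong_sets) auto

lemma cp_fst_meas: "fst \<in> measurable \<pi> borel" and cp_snd_meas: "snd \<in> measurable \<pi> borel"
  unfolding cp_meas by auto

lemma cp_integral_fst:
  fixes g :: "'a \<Rightarrow> real"
  assumes "g \<in> borel_measurable borel"
  shows "integral\<^sup>L \<pi> (\<lambda>p. g (fst p)) = integral\<^sup>L \<alpha> g"
    and "integrable \<pi> (\<lambda>p. g (fst p)) \<longleftrightarrow> integrable \<alpha> g"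
  using integral_distr[OF cp_fst_meas assms] integrable_distr_eq[OF cp_fst_meas assms]
  unfolding cp_fst by auto

lemma cp_integral_snd:
  fixes g :: "'a \<Rightarrow> real"
  assumes "g \<in> borel_measurable borel"
  shows "integral\<^sup>L \<pi> (\<lambda>p. g (snd p)) = integral\<^sup>L \<rho> g"
    and "integrable \<pi> (\<lambda>p. g (snd p)) \<longleftrightarrow> integrable \<rho> g"
  using integral_distr[OF cp_snd_meas assms] integrable_distr_eq[OF cp_snd_meas assms]
  unfolding cp_snd by auto

lemma cp_AE_snd:
  assumes "AE y in \<rho>. P y" "{y. P y} \<in> sets borel"
  shows "AE p in \<pi>. P (snd p)"
proof -
  have "AE y in distr \<pi> borel snd. P y" unfolding cp_snd using assms(1) .
  then show ?thesis
    using AE_distr_iff[OF cp_snd_meas, of P] assms(2) by (simp add: pred_def)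
qed

lemma cp_AE_fst:
  assumes "AE y in \<alpha>. P y" "{y. P y} \<in> sets borel"
  shows "AE p in \<pi>. P (fst p)"
proof -
  have "AE y in distr \<pi> borel fst. P y" unfolding cp_fst using assms(1) .
  then show ?thesis
    using AE_distr_iff[OF cp_fst_meas, of P] assms(2) by (simp add: pred_def)
qed

lemma cp_value_bound:
  assumes "\<rho> \<in> prob_unit_ball" and "integrable \<alpha> norm"
  shows "integrable \<pi> (\<lambda>(x, y). inner x y)"
    and "\<bar>integral\<^sup>L \<pi> (\<lambda>(x, y). inner x y)\<bar> \<le> integral\<^sup>L \<alpha> norm"
proof -
  interpret prob_space \<pi> by (rule cp_prob)
  have AE: "AE p in \<pi>. norm (snd p) \<le> 1"
    by (rule cp_AE_snd[OF prob_unit_ball_AE[OF assms(1)]]) auto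
  have in1: "integrable \<pi> (\<lambda>p. norm (fst p))"
    using cp_integral_fst(2)[of norm] assms(2) by auto
  have bd: "AE p in \<pi>. norm ((\<lambda>(x, y). inner x y) p) \<le> norm (fst p)"
    using AE
  proof eventually_elim
    case (elim p)
    obtain x y where p: "p = (x, y)" by (cases p)
    have "\<bar>inner x y\<bar> \<le> norm x * norm y" by (rule Cauchy_Schwarz_ineq2)
    also have "\<dots> \<le> norm x" using elim p by (simp add: mult_left_le)
    finally show ?case using p by simp
  qed
  have meas: "(\<lambda>(x, y). inner x y) \<in> borel_measurable \<pi>"
    unfolding cp_meas by measurable
  show int: "integrable \<pi> (\<lambda>(x, y). inner x y)"
    by (rule Bochner_Integration.integrable_bound[OF in1 meas]) (use bd in auto)
  have "norm (integral\<^sup>L \<pi> (\<lambda>(x, y). inner x y)) \<le> integral\<^sup>L \<pi> (\<lambda>p. norm ((\<lambda>(x, y). inner x y) p))"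
    by (rule integral_norm_bound)
  also have "\<dots> \<le> integral\<^sup>L \<pi> (\<lambda>p. norm (fst p))"
    by (rule integral_mono_AE[OF integrable_norm[OF int] in1 bd])
  also have "\<dots> = integral\<^sup>L \<alpha> norm" using cp_integral_fst(1)[of norm] by auto
  finally show "\<bar>integral\<^sup>L \<pi> (\<lambda>(x, y). inner x y)\<bar> \<le> integral\<^sup>L \<alpha> norm" by simp
qed

end

lemma product_coupling:
  fixes \<alpha> \<rho> :: "'a::euclidean_space measure"
  assumes "\<alpha> \<in> borel_prob" "\<rho> \<in> borel_prob"
  shows "\<alpha> \<Otimes>\<^sub>M \<rho> \<in> couplings \<alpha> \<rho>"
proof -
  interpret a: prob_space \<alpha> using assms by (auto simp: borel_prob_def)
  interpret r: prob_space \<rho> using assms by (auto simp: borel_prob_def)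
  interpret pair_prob_space \<alpha> \<rho> ..
  have sa: "sets \<alpha> = sets borel" and sr: "sets \<rho> = sets borel" using assms by (auto simp: borel_prob_def)
  have s: "sets (\<alpha> \<Otimes>\<^sub>M \<rho>) = sets (borel \<Otimes>\<^sub>M borel)"
    using sa sr by (intro sets_pair_measure_cong) auto
  have "distr (\<alpha> \<Otimes>\<^sub>M \<rho>) borel fst = distr (\<alpha> \<Otimes>\<^sub>M \<rho>) \<alpha> fst"
    using sa by (intro distr_cong) auto
  also have "\<dots> = \<alpha>" by (rule r.distr_pair_fst)
  finally have 1: "distr (\<alpha> \<Otimes>\<^sub>M \<rho>) borel fst = \<alpha>" .
  have "distr (\<alpha> \<Otimes>\<^sub>M \<rho>) borel snd = distr (\<alpha> \<Otimes>\<^sub>M \<rho>) \<rho> snd"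
    using sr by (intro distr_cong) auto
  also have "\<dots> = \<rho>"
  proof (intro measure_eqI)
    fix A assume A: "A \<in> sets (distr (\<alpha> \<Otimes>\<^sub>M \<rho>) \<rho> snd)"
    then have A': "A \<in> sets \<rho>" by simp
    from A have "emeasure (distr (\<alpha> \<Otimes>\<^sub>M \<rho>) \<rho> snd) A = emeasure (\<alpha> \<Otimes>\<^sub>M \<rho>) (space \<alpha> \<times> A)"
      by (auto simp add: emeasure_distr space_pair_measure dest: sets.sets_into_space intro!: arg_cong2[where f=emeasure])
    also have "\<dots> = emeasure \<rho> A"
      using A' by (subst r.emeasure_pair_measure_Times) (auto simp: a.emeasure_space_1)
    finally show "emeasure (distr (\<alpha> \<Otimes>\<^sub>M \<rho>) \<rho> snd) A = emeasure \<rho> A" .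
  qed simp
  finally have 2: "distr (\<alpha> \<Otimes>\<^sub>M \<rho>) borel snd = \<rho>" .
  show ?thesis unfolding couplings_def using s 1 2 prob_space_axioms by auto
qed

lemma corr_cost_bounds:
  fixes \<alpha> \<rho> :: "'a::euclidean_space measure"
  assumes "\<alpha> \<in> borel_prob" "\<rho> \<in> prob_unit_ball" "integrable \<alpha> norm"
  shows "corr_cost \<alpha> \<rho> \<le> integral\<^sup>L \<alpha> norm"
    and "\<And>\<pi>. \<pi> \<in> couplings \<alpha> \<rho> \<Longrightarrow> integral\<^sup>L \<pi> (\<lambda>(x, y). inner x y) \<le> corr_cost \<alpha> \<rho>"
    and "- integral\<^sup>L \<alpha> norm \<le> corr_cost \<alpha> \<rho>"
proof -
  have rb: "\<rho> \<in> borel_prob" using assms(2) by (auto simp: prob_unit_ball_def)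
  have ne: "couplings \<alpha> \<rho> \<noteq> {}" using product_coupling[OF assms(1) rb] by auto
  have ub: "\<And>\<pi>. \<pi> \<in> couplings \<alpha> \<rho> \<Longrightarrow> integral\<^sup>L \<pi> (\<lambda>(x, y). inner x y) \<le> integral\<^sup>L \<alpha> norm"
    using cp_value_bound(2)[OF _ assms(2,3)] by (meson abs_le_D1)
  then have bdd: "bdd_above ((\<lambda>\<pi>. integral\<^sup>L \<pi> (\<lambda>(x, y). inner x y)) ` couplings \<alpha> \<rho>)"
    by (intro bdd_aboveI[of _ "integral\<^sup>L \<alpha> norm"]) auto
  show "corr_cost \<alpha> \<rho> \<le> integral\<^sup>L \<alpha> norm"
    unfolding corr_cost_def using ne ub by (intro cSUP_least) auto
  show up: "\<And>\<pi>. \<pi> \<in> couplings \<alpha> \<rho> \<Longrightarrow> integral\<^sup>L \<pi> (\<lambda>(x, y). inner x y) \<le> corr_cost \<alpha> \<rho>"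
    unfolding corr_cost_def using bdd by (intro cSUP_upper) auto
  have pc: "\<alpha> \<Otimes>\<^sub>M \<rho> \<in> couplings \<alpha> \<rho>" using product_coupling[OF assms(1) rb] .
  have "- integral\<^sup>L \<alpha> norm \<le> integral\<^sup>L (\<alpha> \<Otimes>\<^sub>M \<rho>) (\<lambda>(x, y). inner x y)"
    using cp_value_bound(2)[OF pc assms(2,3)] by linarith
  also have "\<dots> \<le> corr_cost \<alpha> \<rho>" by (rule up[OF pc])
  finally show "- integral\<^sup>L \<alpha> norm \<le> corr_cost \<alpha> \<rho>" .
qed

lemma fin_supp_meas:
  fixes \<phi> :: "'a::euclidean_space \<Rightarrow> real"
  assumes "finite Y"
  shows "(\<lambda>w. if w \<in> Y then \<phi> w else 0) \<in> borel_measurable borel"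
proof -
  have eq: "(\<lambda>w. if w \<in> Y then \<phi> w else 0) = (\<lambda>w. \<Sum>u\<in>Y. \<phi> u * indicator {u} w)"
  proof
    fix w
    have "(\<Sum>u\<in>Y. \<phi> u * indicator {u} w) = (\<Sum>u\<in>Y. if u = w then \<phi> u else 0)"
      by (intro sum.cong) (auto simp: indicator_def)
    also have "\<dots> = (if w \<in> Y then \<phi> w else 0)"
      using assms by (simp add: sum.delta')
    finally show "(if w \<in> Y then \<phi> w else 0) = (\<Sum>u\<in>Y. \<phi> u * indicator {u} w)" by simp
  qed
  show ?thesis unfolding eq by measurable
qed

lemma cc_upper:
  fixes \<alpha> \<rho> :: "'a::euclidean_space measure"
  assumes \<alpha>: "\<alpha> \<in> borel_prob" and \<rho>: "\<rho> \<in> prob_unit_ball" and n: "integrable \<alpha> norm"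
    and F: "integrable \<alpha> F" and Fm: "F \<in> borel_measurable borel"
    and \<psi>: "integrable \<rho> \<psi>" and \<psi>m: "\<psi> \<in> borel_measurable borel"
    and G: "G \<in> sets borel" "AE y in \<rho>. y \<in> G"
    and ineq: "\<And>x y. y \<in> G \<Longrightarrow> inner x y \<le> F x + \<psi> y"
  shows "corr_cost \<alpha> \<rho> \<le> integral\<^sup>L \<alpha> F + integral\<^sup>L \<rho> \<psi>"
proof -
  have rb: "\<rho> \<in> borel_prob" using \<rho> by (auto simp: prob_unit_ball_def)
  have ne: "couplings \<alpha> \<rho> \<noteq> {}" using product_coupling[OF \<alpha> rb] by auto
  show ?thesis unfolding corr_cost_def
  proof (rule cSUP_least[OF ne])
    fix \<pi> assume cp: "\<pi> \<in> couplings \<alpha> \<rho>"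
    have AE: "AE p in \<pi>. snd p \<in> G" using cp_AE_snd[OF cp G(2)] G(1) by simp
    have i1: "integrable \<pi> (\<lambda>(x, y). inner x y)" by (rule cp_value_bound(1)[OF cp \<rho> n])
    have i2: "integrable \<pi> (\<lambda>p. F (fst p))" using cp_integral_fst(2)[OF cp Fm] F by simp
    have i3: "integrable \<pi> (\<lambda>p. \<psi> (snd p))" using cp_integral_snd(2)[OF cp \<psi>m] \<psi> by simp
    have "integral\<^sup>L \<pi> (\<lambda>(x, y). inner x y) \<le> integral\<^sup>L \<pi> (\<lambda>p. F (fst p) + \<psi> (snd p))"
    proof (rule integral_mono_AE[OF i1 Bochner_Integration.integrable_add[OF i2 i3]])
      show "AE p in \<pi>. (case p of (x, y) \<Rightarrow> inner x y) \<le> F (fst p) + \<psi> (snd p)"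
        using AE by eventually_elim (auto intro: ineq)
    qed
    also have "\<dots> = integral\<^sup>L \<pi> (\<lambda>p. F (fst p)) + integral\<^sup>L \<pi> (\<lambda>p. \<psi> (snd p))"
      by (rule Bochner_Integration.integral_add[OF i2 i3])
    also have "\<dots> = integral\<^sup>L \<alpha> F + integral\<^sup>L \<rho> \<psi>"
      using cp_integral_fst(1)[OF cp Fm] cp_integral_snd(1)[OF cp \<psi>m] by simp
    finally show "integral\<^sup>L \<pi> (\<lambda>(x, y). inner x y) \<le> integral\<^sup>L \<alpha> F + integral\<^sup>L \<rho> \<psi>" .
  qed
qed

lemma graph_coupling:
  fixes \<alpha> :: "'a::euclidean_space measure" and g :: "'a \<Rightarrow> 'a"
  assumes \<alpha>: "\<alpha> \<in> borel_prob" and gm: "g \<in> borel_measurable borel"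
  shows "distr \<alpha> (borel \<Otimes>\<^sub>M borel) (\<lambda>x. (x, g x)) \<in> couplings \<alpha> (distr \<alpha> borel g)"
proof -
  interpret prob_space \<alpha> using \<alpha> by (auto simp: borel_prob_def)
  have sa: "sets \<alpha> = sets borel" using \<alpha> by (auto simp: borel_prob_def)
  have m: "(\<lambda>x. (x, g x)) \<in> measurable \<alpha> (borel \<Otimes>\<^sub>M borel)"
    unfolding measurable_cong_sets[OF sa refl] using gm by (intro measurable_Pair) auto
  have "distr (distr \<alpha> (borel \<Otimes>\<^sub>M borel) (\<lambda>x. (x, g x))) borel fst = distr \<alpha> borel (\<lambda>x. fst (x, g x))"
    using m by (subst distr_distr) (simp_all add: comp_def)
  also have "\<dots> = distr \<alpha> borel (\<lambda>x. x)" by simp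
  also have "\<dots> = \<alpha>" using sa by (intro distr_id2) simp
  finally have 1: "distr (distr \<alpha> (borel \<Otimes>\<^sub>M borel) (\<lambda>x. (x, g x))) borel fst = \<alpha>" .
  have "distr (distr \<alpha> (borel \<Otimes>\<^sub>M borel) (\<lambda>x. (x, g x))) borel snd = distr \<alpha> borel (\<lambda>x. snd (x, g x))"
    using m by (subst distr_distr) (simp_all add: comp_def)
  then have 2: "distr (distr \<alpha> (borel \<Otimes>\<^sub>M borel) (\<lambda>x. (x, g x))) borel snd = distr \<alpha> borel g" by simp
  show ?thesis unfolding couplings_def using 1 2 prob_space_distr[OF m] by auto
qed

lemma graph_lower:
  fixes \<alpha> :: "'a::euclidean_space measure" and g :: "'a \<Rightarrow> 'a"
  assumes \<alpha>: "\<alpha> \<in> borel_prob" and gm: "g \<in> borel_measurable borel"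
    and \<rho>: "distr \<alpha> borel g \<in> prob_unit_ball" and n: "integrable \<alpha> norm"
  shows "integral\<^sup>L \<alpha> (\<lambda>x. inner x (g x)) \<le> corr_cost \<alpha> (distr \<alpha> borel g)"
proof -
  let ?\<pi> = "distr \<alpha> (borel \<Otimes>\<^sub>M borel) (\<lambda>x. (x, g x))"
  have cp: "?\<pi> \<in> couplings \<alpha> (distr \<alpha> borel g)" by (rule graph_coupling[OF \<alpha> gm])
  have sa: "sets \<alpha> = sets borel" using \<alpha> by (auto simp: borel_prob_def)
  have m: "(\<lambda>x. (x, g x)) \<in> measurable \<alpha> (borel \<Otimes>\<^sub>M borel)"
    unfolding measurable_cong_sets[OF sa refl] using gm by (intro measurable_Pair) auto
  have "integral\<^sup>L ?\<pi> (\<lambda>(x, y). inner x y) = integral\<^sup>L \<alpha> (\<lambda>x. inner x (g x))"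
    by (subst integral_distr[OF m]) auto
  then show ?thesis using corr_cost_bounds(2)[OF \<alpha> \<rho> n cp] by simp
qed

lemma bp_meas: "\<alpha> \<in> borel_prob \<Longrightarrow> measurable \<alpha> N = measurable borel N"
  by (intro measurable_cong_sets) (auto simp: borel_prob_def)

lemma bp_integrable_bound:
  fixes \<alpha> :: "'a::euclidean_space measure" and F :: "'a \<Rightarrow> real"
  assumes \<alpha>: "\<alpha> \<in> borel_prob" and n: "integrable \<alpha> norm"
    and Fm: "F \<in> borel_measurable borel" and bd: "\<And>x. \<bar>F x\<bar> \<le> a * norm x + b"
  shows "integrable \<alpha> F"
proof -
  interpret prob_space \<alpha> using \<alpha> by (auto simp: borel_prob_def)
  have "integrable \<alpha> (\<lambda>x. a * norm x + b)"
    using n by (intro Bochner_Integration.integrable_add integrable_mult_right) auto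
  moreover have "F \<in> borel_measurable \<alpha>" using Fm by (simp only: bp_meas[OF \<alpha>])
  moreover have "AE x in \<alpha>. norm (F x) \<le> norm (a * norm x + b)"
    using bd by (intro AE_I2) (auto intro: order_trans[OF _ abs_ge_self])
  ultimately show ?thesis
    by (rule Bochner_Integration.integrable_bound)
qed

lemma poly_bound:
  fixes \<mu> \<nu> :: "'a::euclidean_space measure" and y :: "nat \<Rightarrow> 'a" and c :: "nat \<Rightarrow> real"
  assumes \<mu>: "\<mu> \<in> borel_prob" and \<nu>: "\<nu> \<in> borel_prob"
    and n\<mu>: "integrable \<mu> norm" and n\<nu>: "integrable \<nu> norm"
    and n: "n > 0" and y1: "\<And>k. k < n \<Longrightarrow> norm (y k) \<le> 1"
  shows "\<exists>\<rho>\<in>prob_unit_ball. corr_cost \<nu> \<rho> - corr_cost \<mu> \<rho>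
     \<le> integral\<^sup>L \<nu> (\<lambda>x. Max ((\<lambda>k. inner (y k) x - c k) ` {..<n}))
      - integral\<^sup>L \<mu> (\<lambda>x. Max ((\<lambda>k. inner (y k) x - c k) ` {..<n}))"
proof -
  define F where "F = (\<lambda>x. Max ((\<lambda>k. inner (y k) x - c k) ` {..<n}))"
  define K where "K = (\<Sum>k<n. \<bar>c k\<bar>)"
  have ne: "{..<n} \<noteq> {}" using n by auto
  have Fge: "inner (y k) x - c k \<le> F x" if "k < n" for k x
    unfolding F_def using that by (intro Max_ge) auto
  have Fin: "\<exists>k<n. F x = inner (y k) x - c k" for x
  proof -
    have "F x \<in> (\<lambda>k. inner (y k) x - c k) ` {..<n}" unfolding F_def using ne by (intro Max_in) auto
    then show ?thesis by auto
  qed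
  have ck: "\<bar>c k\<bar> \<le> K" if "k < n" for k
    unfolding K_def using that by (intro member_le_sum) auto
  have Fm: "F \<in> borel_measurable borel" unfolding F_def by measurable
  have Fbd: "\<bar>F x\<bar> \<le> 1 * norm x + K" for x
  proof -
    obtain k where k: "k < n" "F x = inner (y k) x - c k" using Fin by blast
    have "\<bar>inner (y k) x\<bar> \<le> norm (y k) * norm x" by (rule Cauchy_Schwarz_ineq2)
    also have "\<dots> \<le> norm x" using y1[OF k(1)] by (simp add: mult_left_le_one_le)
    finally show ?thesis using k ck[OF k(1)] by simp
  qed
  have Fi\<mu>: "integrable \<mu> F" by (rule bp_integrable_bound[OF \<mu> n\<mu> Fm Fbd])
  have Fi\<nu>: "integrable \<nu> F" by (rule bp_integrable_bound[OF \<nu> n\<nu> Fm Fbd])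
  define \<kappa> where "\<kappa> x = (LEAST k. k < n \<and> inner (y k) x - c k = F x)" for x
  have \<kappa>: "\<kappa> x < n \<and> inner (y (\<kappa> x)) x - c (\<kappa> x) = F x" for x
  proof -
    obtain k where "k < n" "F x = inner (y k) x - c k" using Fin by blast
    then have "k < n \<and> inner (y k) x - c k = F x" by simp
    then show ?thesis unfolding \<kappa>_def by (rule LeastI[where P="\<lambda>k. k < n \<and> inner (y k) x - c k = F x"])
  qed
  have \<kappa>m: "\<kappa> \<in> measurable borel (count_space UNIV)"
    unfolding \<kappa>_def using Fm by measurable
  define g where "g x = y (\<kappa> x)" for x
  have gm: "g \<in> borel_measurable borel"
    unfolding g_def by (rule measurable_compose[OF \<kappa>m]) simp
  define Y where "Y = y ` {..<n}"
  have gY: "g x \<in> Y" for x unfolding g_def Y_def using \<kappa> by auto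
  have Yb: "\<And>w. w \<in> Y \<Longrightarrow> norm w \<le> 1" unfolding Y_def using y1 by auto
  have finY: "finite Y" unfolding Y_def by simp
  interpret m: prob_space \<mu> using \<mu> by (auto simp: borel_prob_def)
  have gm\<mu>: "g \<in> measurable \<mu> borel" using gm by (simp only: bp_meas[OF \<mu>])
  define \<rho> where "\<rho> = distr \<mu> borel g"
  have \<rho>: "\<rho> \<in> prob_unit_ball"
  proof -
    have "prob_space \<rho>" unfolding \<rho>_def by (rule m.prob_space_distr[OF gm\<mu>])
    moreover have "sets \<rho> = sets borel" unfolding \<rho>_def by simp
    moreover have "measure_support \<rho> \<subseteq> cball 0 1"
    proof
      fix z assume z: "z \<in> measure_support \<rho>"
      show "z \<in> cball 0 1"
      proof (rule ccontr)
        assume "z \<notin> cball 0 1"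
        then have e: "norm z - 1 > 0" by simp
        have "g -` ball z (norm z - 1) \<inter> space \<mu> = {}"
        proof -
          have "g x \<notin> ball z (norm z - 1)" for x
          proof -
            have "norm z - norm (g x) \<le> dist z (g x)" by (simp add: dist_norm norm_triangle_ineq2)
            then show ?thesis using Yb[OF gY[of x]] by simp
          qed
          then show ?thesis by auto
        qed
        then have "emeasure \<rho> (ball z (norm z - 1)) = 0"
          unfolding \<rho>_def by (subst emeasure_distr[OF gm\<mu>]) auto
        moreover have "0 < emeasure \<rho> (ball z (norm z - 1))"
          using z e unfolding measure_support_def by blast
        ultimately show False by simp
      qed
    qed
    ultimately show ?thesis by (auto simp: prob_unit_ball_def borel_prob_def)
  qed
  define \<phi> where "\<phi> w = (if w \<in> Y then Min (c ` {k. k < n \<and> y k = w}) else 0)" for w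
  have \<phi>m: "\<phi> \<in> borel_measurable borel"
    unfolding \<phi>_def[abs_def] by (rule fin_supp_meas[OF finY])
  have \<phi>in: "\<exists>k<n. y k = w \<and> \<phi> w = c k" if "w \<in> Y" for w
  proof -
    have "{k. k < n \<and> y k = w} \<noteq> {}" using that unfolding Y_def by auto
    then have "Min (c ` {k. k < n \<and> y k = w}) \<in> c ` {k. k < n \<and> y k = w}"
      by (intro Min_in) auto
    then show ?thesis using that unfolding \<phi>_def by auto
  qed
  have \<phi>le: "\<phi> (y k) \<le> c k" if "k < n" for k
  proof -
    have "y k \<in> Y" unfolding Y_def using that by auto
    then show ?thesis unfolding \<phi>_def using that by (auto intro!: Min_le)
  qed
  have \<phi>g: "\<phi> (g x) = c (\<kappa> x)" for x
  proof -
    obtain k where k: "k < n" "y k = g x" "\<phi> (g x) = c k" using \<phi>in[OF gY[of x]] by blast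
    have "\<phi> (g x) \<le> c (\<kappa> x)" using \<phi>le[of "\<kappa> x"] \<kappa> unfolding g_def by auto
    moreover have "inner (y k) x - c k \<le> F x" by (rule Fge[OF k(1)])
    then have "c (\<kappa> x) \<le> c k" using \<kappa>[of x] k(2) unfolding g_def by simp
    ultimately show ?thesis using k by simp
  qed
  have ineq: "inner x w \<le> F x + \<phi> w" if wY: "w \<in> Y" for x w
  proof -
    obtain k where k: "k < n" "y k = w" "\<phi> w = c k" using \<phi>in[OF wY] by blast
    show ?thesis using Fge[OF k(1), of x] k by (simp add: inner_commute)
  qed
  have \<phi>bd: "\<bar>\<phi> w\<bar> \<le> K" for w
    using \<phi>in[of w] ck unfolding \<phi>_def
    by (cases "w \<in> Y") (auto simp: K_def)
  interpret r: prob_space \<rho> using \<rho> by (auto simp: prob_unit_ball_def borel_prob_def)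
  have \<phi>i: "integrable \<rho> \<phi>"
    using \<phi>m \<phi>bd by (intro r.integrable_const_bound[of _ K]) (auto simp: \<rho>_def)
  have AEY: "AE w in \<rho>. w \<in> Y"
    unfolding \<rho>_def using gY finY by (subst AE_distr_iff[OF gm\<mu>]) (auto intro: borel_closed finite_imp_closed)
  have up: "corr_cost \<nu> \<rho> \<le> integral\<^sup>L \<nu> F + integral\<^sup>L \<rho> \<phi>"
    by (rule cc_upper[OF \<nu> \<rho> n\<nu> Fi\<nu> Fm \<phi>i \<phi>m _ AEY ineq])
      (auto intro: borel_closed finite_imp_closed finY)
  have int\<phi>: "integral\<^sup>L \<rho> \<phi> = integral\<^sup>L \<mu> (\<lambda>x. \<phi> (g x))"
    unfolding \<rho>_def by (rule integral_distr[OF gm\<mu> \<phi>m])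
  have \<phi>gi: "integrable \<mu> (\<lambda>x. \<phi> (g x))"
    using \<phi>bd by (intro m.integrable_const_bound[of _ K]) (auto intro: measurable_compose[OF gm\<mu> \<phi>m])
  have "integral\<^sup>L \<mu> (\<lambda>x. inner x (g x)) = integral\<^sup>L \<mu> (\<lambda>x. F x + \<phi> (g x))"
  proof (intro Bochner_Integration.integral_cong refl)
    fix x
    have "inner (y (\<kappa> x)) x - c (\<kappa> x) = F x" using \<kappa>[of x] by simp
    then show "inner x (g x) = F x + \<phi> (g x)" using \<phi>g[of x] unfolding g_def by (simp add: inner_commute)
  qed
  also have "\<dots> = integral\<^sup>L \<mu> F + integral\<^sup>L \<mu> (\<lambda>x. \<phi> (g x))"
    by (rule Bochner_Integration.integral_add[OF Fi\<mu> \<phi>gi])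
  finally have low: "integral\<^sup>L \<mu> F + integral\<^sup>L \<mu> (\<lambda>x. \<phi> (g x)) \<le> corr_cost \<mu> \<rho>"
    using graph_lower[OF \<mu> gm _ n\<mu>] \<rho> unfolding \<rho>_def by simp
  have "corr_cost \<nu> \<rho> - corr_cost \<mu> \<rho> \<le> integral\<^sup>L \<nu> F - integral\<^sup>L \<mu> F"
    using up low int\<phi> by simp
  then show ?thesis using \<rho> unfolding F_def by blast
qed

lemma dc_bp:
  fixes \<alpha> :: "'a::euclidean_space measure"
  assumes \<alpha>: "\<alpha> \<in> borel_prob" and n: "integrable \<alpha> norm"
    and fm: "f \<in> borel_measurable borel" and sm: "\<And>i. s i \<in> borel_measurable borel"
    and lim: "\<And>x. (\<lambda>i. s i x) \<longlonglongrightarrow> f x"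
    and bd: "\<And>i x. \<bar>s i x\<bar> \<le> norm x + B"
  shows "(\<lambda>i. integral\<^sup>L \<alpha> (s i)) \<longlonglongrightarrow> integral\<^sup>L \<alpha> (f :: 'a \<Rightarrow> real)"
proof -
  interpret prob_space \<alpha> using \<alpha> by (auto simp: borel_prob_def)
  have fm': "f \<in> borel_measurable \<alpha>" using fm by (simp only: bp_meas[OF \<alpha>])
  have sm': "\<And>i. s i \<in> borel_measurable \<alpha>" using sm by (simp only: bp_meas[OF \<alpha>])
  have w: "integrable \<alpha> (\<lambda>x. norm x + B)"
    using n by (intro Bochner_Integration.integrable_add) auto
  show ?thesis
    by (rule integral_dominated_convergence[OF fm' sm' w]) (use lim bd in auto)
qed

lemma lip_cont:
  fixes f :: "'a::euclidean_space \<Rightarrow> real"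
  assumes "\<And>x x'. \<bar>f x - f x'\<bar> \<le> norm (x - x')"
  shows "continuous_on UNIV f"
  unfolding continuous_on_iff
proof (intro ballI allI impI)
  fix x and e :: real assume "e > 0"
  show "\<exists>d>0. \<forall>x'\<in>UNIV. dist x' x < d \<longrightarrow> dist (f x') (f x) < e"
    using assms \<open>e>0\<close> by (intro exI[of _ e]) (auto simp: dist_norm intro: le_less_trans)
qed

lemma dense_exists:
  obtains D :: "'a::euclidean_space set" where "countable D" "\<And>X. open X \<Longrightarrow> X \<noteq> {} \<Longrightarrow> \<exists>d\<in>D. d \<in> X"
proof -
  obtain B :: "'a set set" where B: "countable B" "\<And>C. C \<in> B \<Longrightarrow> open C"
    "\<And>S. open S \<Longrightarrow> \<exists>U. U \<subseteq> B \<and> S = \<Union>U"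
    using univ_second_countable by blast
  define D where "D = (\<lambda>C. SOME x. x \<in> C) ` {C\<in>B. C \<noteq> {}}"
  have "countable D" unfolding D_def using B(1) by simp
  moreover have "\<exists>d\<in>D. d \<in> X" if X: "open X" "X \<noteq> {}" for X
  proof -
    obtain U where U: "U \<subseteq> B" "X = \<Union>U" using B(3)[OF X(1)] by blast
    then obtain C where C: "C \<in> U" "C \<noteq> {}" using X(2) by auto
    have "(SOME x. x \<in> C) \<in> C" using C(2) by (simp add: some_in_eq)
    moreover have "(SOME x. x \<in> C) \<in> D" unfolding D_def using C U by auto
    ultimately show ?thesis using C U by blast
  qed
  ultimately show ?thesis using that by blast
qed

lemma partA:
  fixes \<mu> \<nu> :: "'a::euclidean_space measure" and f :: "'a \<Rightarrow> real"
  assumes \<mu>: "\<mu> \<in> borel_prob" and \<nu>: "\<nu> \<in> borel_prob"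
    and n\<mu>: "integrable \<mu> norm" and n\<nu>: "integrable \<nu> norm"
    and f: "f \<in> convex_lip1" and e: "e > 0"
  shows "\<exists>\<rho>\<in>prob_unit_ball. corr_cost \<nu> \<rho> - corr_cost \<mu> \<rho>
     \<le> integral\<^sup>L \<nu> f - integral\<^sup>L \<mu> f + e"
proof -
  have lip: "\<And>x x'. \<bar>f x - f x'\<bar> \<le> norm (x - x')" by (rule convex_lip1_lipschitz[OF f])
  have cf: "convex_on UNIV f" and sb: "\<And>x y. y \<in> subdiff f x \<Longrightarrow> norm y \<le> 1"
    using f by (auto simp: convex_lip1_def)
  have fm: "f \<in> borel_measurable borel" by (rule borel_measurable_continuous_onI[OF lip_cont[OF lip]])
  obtain D :: "'a set" where D: "countable D" "\<And>X. open X \<Longrightarrow> X \<noteq> {} \<Longrightarrow> \<exists>d\<in>D. d \<in> X"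
    using dense_exists by blast
  have Dne: "D \<noteq> {}" using D(2)[of UNIV] by auto
  define xs where "xs = from_nat_into D"
  have xsD: "range xs = D" unfolding xs_def using Dne D(1) by simp
  define ys where "ys k = (SOME y. y \<in> subdiff f (xs k))" for k
  have ys: "ys k \<in> subdiff f (xs k)" for k
    unfolding ys_def using subgrad_exists[OF cf] by (rule someI_ex)
  have ys1: "norm (ys k) \<le> 1" for k using sb[OF ys] .
  define c where "c k = inner (ys k) (xs k) - f (xs k)" for k
  define F where "F n x = Max ((\<lambda>k. inner (ys k) x - c k) ` {..<n})" for n x
  have aff: "inner (ys k) x - c k = f (xs k) + inner (ys k) (x - xs k)" for k x
    unfolding c_def by (simp add: inner_diff_right)
  have affle: "inner (ys k) x - c k \<le> f x" for k x
  proof -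
    have "inner (ys k) (x - xs k) \<le> f x - f (xs k)" using ys[of k] unfolding subdiff_def by auto
    then show ?thesis unfolding aff by simp
  qed
  have affge: "f x - 2 * norm (x - xs k) \<le> inner (ys k) x - c k" for k x
  proof -
    have "\<bar>inner (ys k) (x - xs k)\<bar> \<le> norm (ys k) * norm (x - xs k)" by (rule Cauchy_Schwarz_ineq2)
    also have "\<dots> \<le> norm (x - xs k)" using ys1[of k] by (simp add: mult_left_le_one_le)
    finally have "- norm (x - xs k) \<le> inner (ys k) (x - xs k)" by simp
    moreover have "f x - f (xs k) \<le> norm (x - xs k)" using lip[of x "xs k"] by simp
    ultimately show ?thesis unfolding aff by simp
  qed
  have Fle: "F (Suc i) x \<le> f x" for i x
    unfolding F_def using affle by (subst Max_le_iff) auto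
  have Fge: "inner (ys k) x - c k \<le> F (Suc i) x" if "k \<le> i" for k i x
    unfolding F_def using that by (intro Max_ge) auto
  have Fm: "F (Suc i) \<in> borel_measurable borel" for i
    unfolding F_def[abs_def] by measurable
  have lim: "(\<lambda>i. F (Suc i) x) \<longlonglongrightarrow> f x" for x
  proof (rule LIMSEQ_I)
    fix r :: real assume r: "r > 0"
    obtain d where d: "d \<in> D" "d \<in> ball x (r / 3)" using D(2)[of "ball x (r/3)"] r by auto
    obtain k where k: "xs k = d" using d(1) xsD by auto
    show "\<exists>no. \<forall>i\<ge>no. norm (F (Suc i) x - f x) < r"
    proof (intro exI allI impI)
      fix i assume "k \<le> i"
      have "f x - 2 * norm (x - xs k) \<le> F (Suc i) x"
        using affge[of x k] Fge[OF \<open>k \<le> i\<close>, of x] by simp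
      moreover have "norm (x - xs k) < r / 3" using d(2) k by (simp add: dist_norm)
      ultimately show "norm (F (Suc i) x - f x) < r" using Fle[of i x] by simp
    qed
  qed
  define B where "B = \<bar>f 0\<bar> + \<bar>c 0\<bar>"
  have bd: "\<bar>F (Suc i) x\<bar> \<le> norm x + B" for i x
  proof -
    have "\<bar>inner (ys 0) x\<bar> \<le> norm (ys 0) * norm x" by (rule Cauchy_Schwarz_ineq2)
    also have "\<dots> \<le> norm x" using ys1[of 0] by (simp add: mult_left_le_one_le)
    finally have "- norm x - \<bar>c 0\<bar> \<le> F (Suc i) x" using Fge[of 0 i x] by simp
    moreover have "f x \<le> norm x + \<bar>f 0\<bar>" using lip[of x 0] by simp
    ultimately show ?thesis using Fle[of i x] unfolding B_def by simp
  qed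
  have L\<mu>: "(\<lambda>i. integral\<^sup>L \<mu> (F (Suc i))) \<longlonglongrightarrow> integral\<^sup>L \<mu> f"
    by (rule dc_bp[OF \<mu> n\<mu> fm Fm lim bd])
  have L\<nu>: "(\<lambda>i. integral\<^sup>L \<nu> (F (Suc i))) \<longlonglongrightarrow> integral\<^sup>L \<nu> f"
    by (rule dc_bp[OF \<nu> n\<nu> fm Fm lim bd])
  have "(\<lambda>i. integral\<^sup>L \<nu> (F (Suc i)) - integral\<^sup>L \<mu> (F (Suc i))) \<longlonglongrightarrow> integral\<^sup>L \<nu> f - integral\<^sup>L \<mu> f"
    by (intro tendsto_diff L\<nu> L\<mu>)
  from LIMSEQ_D[OF this e] obtain i where
    i: "norm ((integral\<^sup>L \<nu> (F (Suc i)) - integral\<^sup>L \<mu> (F (Suc i))) - (integral\<^sup>L \<nu> f - integral\<^sup>L \<mu> f)) < e"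
    by blast
  obtain \<rho> where \<rho>: "\<rho> \<in> prob_unit_ball"
    "corr_cost \<nu> \<rho> - corr_cost \<mu> \<rho> \<le> integral\<^sup>L \<nu> (F (Suc i)) - integral\<^sup>L \<mu> (F (Suc i))"
    using poly_bound[OF \<mu> \<nu> n\<mu> n\<nu>, of "Suc i" ys c] ys1 unfolding F_def by auto
  show ?thesis using \<rho> i by (intro bexI[of _ \<rho>]) auto
qed

lemma quantizer:
  fixes \<delta> :: real
  assumes "\<delta> > 0"
  obtains T :: "'a::euclidean_space \<Rightarrow> 'a" where "T \<in> borel_measurable borel" "finite (range T)"
    "\<And>y. norm (T y) \<le> 1" "\<And>y. norm y \<le> 1 \<Longrightarrow> norm (T y - y) < \<delta>"
proof -
  obtain C where C: "C \<subseteq> cball (0::'a) 1" "finite C" "cball 0 1 \<subseteq> (\<Union>c\<in>C. ball c \<delta>)"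
  proof (rule compactE_image[of "cball (0::'a) 1" "cball 0 1" "\<lambda>c. ball c \<delta>"])
    show "cball 0 1 \<subseteq> (\<Union>c\<in>cball 0 1. ball c \<delta>)" using assms by force
  qed auto
  obtain cs where cs: "set cs = C" using finite_list[OF C(2)] by blast
  define L where "L = length cs"
  define zs where "zs = cs @ [0]"
  define P where "P i y = ((i < L \<and> dist (cs ! i) y < \<delta>) \<or> i = L)" for i y
  define idx where "idx y = (LEAST i. P i y)" for y
  define T where "T y = zs ! idx y" for y
  have idxL: "idx y \<le> L" for y unfolding idx_def P_def by (rule Least_le) simp
  have Tset: "T y \<in> set zs" for y
    unfolding T_def using idxL[of y] by (simp add: zs_def L_def nth_append less_Suc_eq_le[symmetric])
  have idxm: "idx \<in> measurable borel (count_space UNIV)"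
    unfolding idx_def[abs_def] P_def by measurable
  have Tm: "T \<in> borel_measurable borel"
    unfolding T_def[abs_def] by (rule measurable_compose[OF idxm]) simp
  have "range T \<subseteq> set zs" using Tset by auto
  then have fin: "finite (range T)" by (rule finite_subset) simp
  have Tn: "norm (T y) \<le> 1" for y
    using Tset[of y] C(1) cs by (auto simp: zs_def)
  have Tc: "norm (T y - y) < \<delta>" if "norm y \<le> 1" for y
  proof -
    have "y \<in> cball 0 1" using that by simp
    then obtain c where c: "c \<in> C" "y \<in> ball c \<delta>" using C(3) by blast
    obtain i where i: "i < L" "cs ! i = c" using c(1) cs unfolding L_def by (auto simp: in_set_conv_nth)
    have Pi: "P i y" unfolding P_def using i c by auto
    have "idx y \<le> i" unfolding idx_def by (rule Least_le[where P="\<lambda>i. P i y", OF Pi])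
    then have "idx y < L" using i by simp
    moreover have "P (idx y) y" unfolding idx_def by (rule LeastI[where P="\<lambda>i. P i y", OF Pi])
    ultimately have "dist (cs ! idx y) y < \<delta>" unfolding P_def by auto
    moreover have "T y = cs ! idx y" unfolding T_def zs_def using \<open>idx y < L\<close> by (simp add: nth_append L_def)
    ultimately show ?thesis by (simp add: dist_norm)
  qed
  show ?thesis using that[OF Tm fin Tn Tc] .
qed

lemma glue:
  fixes \<nu> \<rho> :: "'a::euclidean_space measure" and A T :: "'a \<Rightarrow> 'a" and Z :: "'a set"
  assumes \<nu>: "\<nu> \<in> borel_prob" and \<rho>: "\<rho> \<in> borel_prob"
    and Am: "A \<in> borel_measurable borel" and Tm: "T \<in> borel_measurable borel"
    and Z: "finite Z" and AZ: "\<And>x. A x \<in> Z" and TZ: "AE y in \<rho>. T y \<in> Z"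
    and eq: "\<And>z. z \<in> Z \<Longrightarrow> measure \<nu> (A -` {z}) = measure \<rho> (T -` {z})"
    and pos: "\<And>z. z \<in> Z \<Longrightarrow> measure \<rho> (T -` {z}) > 0"
  shows "\<exists>\<pi>\<in>couplings \<nu> \<rho>. AE p in \<pi>. A (fst p) = T (snd p)"
proof -
  interpret n: prob_space \<nu> using \<nu> by (auto simp: borel_prob_def)
  interpret r: prob_space \<rho> using \<rho> by (auto simp: borel_prob_def)
  interpret pair_prob_space \<nu> \<rho> ..
  have sn: "sets \<nu> = sets borel" and sr: "sets \<rho> = sets borel" using \<nu> \<rho> by (auto simp: borel_prob_def)
  have spn: "space \<nu> = UNIV" and spr: "space \<rho> = UNIV"
    using sets_eq_imp_space_eq[OF sn] sets_eq_imp_space_eq[OF sr] by auto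
  have sp: "sets (\<nu> \<Otimes>\<^sub>M \<rho>) = sets (borel \<Otimes>\<^sub>M borel)"
    using sn sr by (intro sets_pair_measure_cong) auto
  have mp: "measurable (\<nu> \<Otimes>\<^sub>M \<rho>) = measurable (borel \<Otimes>\<^sub>M borel)"
    using sp by (intro ext measurable_cong_sets) auto
  define b where "b z = measure \<rho> (T -` {z})" for z
  define w where "w p = (\<Sum>z\<in>Z. indicator {z} (A (fst p)) * indicator {z} (T (snd p)) / b z)" for p
  have wm: "(\<lambda>p. ennreal (w p)) \<in> borel_measurable (\<nu> \<Otimes>\<^sub>M \<rho>)"
    unfolding mp w_def[abs_def] using Am Tm by measurable
  have wm': "w \<in> borel_measurable (\<nu> \<Otimes>\<^sub>M \<rho>)"
    unfolding mp w_def[abs_def] using Am Tm by measurable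
  have w_eq: "w (x, y) = (if A x = T y then 1 / b (A x) else 0)" for x y
  proof -
    have "w (x, y) = (\<Sum>z\<in>Z. if z = A x then indicator {z} (T y) / b z else 0)"
      unfolding w_def by (intro sum.cong) (auto simp: indicator_def)
    also have "\<dots> = indicator {A x} (T y) / b (A x)"
      using Z AZ[of x] by (simp add: sum.delta')
    finally show ?thesis by (auto simp: indicator_def)
  qed
  have w_nn: "0 \<le> w p" for p
    using pos unfolding w_def b_def by (intro sum_nonneg) auto
  define \<pi> where "\<pi> = density (\<nu> \<Otimes>\<^sub>M \<rho>) (\<lambda>p. ennreal (w p))"
  have s\<pi>: "sets \<pi> = sets (borel \<Otimes>\<^sub>M borel)" unfolding \<pi>_def using sp by simp
  have sp\<pi>: "space \<pi> = UNIV"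
    unfolding \<pi>_def by (simp add: space_pair_measure spn spr)
  have fstm: "fst \<in> measurable \<pi> borel" and sndm: "snd \<in> measurable \<pi> borel"
    using s\<pi> by (auto simp: measurable_cong_sets[OF s\<pi> refl])
  have m1: "distr \<pi> borel fst = \<nu>"
  proof (rule measure_eqI)
    show "sets (distr \<pi> borel fst) = sets \<nu>" using sn by simp
    fix S assume "S \<in> sets (distr \<pi> borel fst)"
    then have S: "S \<in> sets borel" by simp
    have S': "S \<times> UNIV \<in> sets (\<nu> \<Otimes>\<^sub>M \<rho>)" unfolding sp using S by auto
    have "emeasure (distr \<pi> borel fst) S = emeasure \<pi> (S \<times> UNIV)"
      using S by (subst emeasure_distr[OF fstm S]) (auto simp: sp\<pi> intro!: arg_cong[where f="emeasure \<pi>"])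
    also have "\<dots> = (\<integral>\<^sup>+ p. ennreal (w p) * indicator (S \<times> UNIV) p \<partial>(\<nu> \<Otimes>\<^sub>M \<rho>))"
      unfolding \<pi>_def by (rule emeasure_density[OF wm S'])
    also have "\<dots> = (\<integral>\<^sup>+ x. \<integral>\<^sup>+ y. ennreal (w (x, y)) * indicator (S \<times> UNIV) (x, y) \<partial>\<rho> \<partial>\<nu>)"
    proof (intro r.nn_integral_fst[symmetric])
      note [measurable] = wm' S'
      show "(\<lambda>p. ennreal (w p) * indicator (S \<times> UNIV) p) \<in> borel_measurable (\<nu> \<Otimes>\<^sub>M \<rho>)" by measurable
    qed
    also have "\<dots> = (\<integral>\<^sup>+ x. indicator S x \<partial>\<nu>)"
    proof (intro nn_integral_cong)
      fix x
      have "(\<integral>\<^sup>+ y. ennreal (w (x, y)) * indicator (S \<times> UNIV) (x, y) \<partial>\<rho>)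
          = (\<integral>\<^sup>+ y. ennreal (indicator S x / b (A x)) * indicator (T -` {A x}) y \<partial>\<rho>)"
        by (intro nn_integral_cong) (auto simp: w_eq indicator_def)
      also have "\<dots> = ennreal (indicator S x / b (A x)) * emeasure \<rho> (T -` {A x})"
        using Tm by (intro nn_integral_cmult_indicator) (auto simp: sr measurable_sets_borel)
      also have "\<dots> = indicator S x"
      proof -
        have "b (A x) > 0" using pos AZ unfolding b_def by auto
        moreover have "emeasure \<rho> (T -` {A x}) = ennreal (b (A x))"
          unfolding b_def by (simp add: r.emeasure_eq_measure)
        ultimately show ?thesis
          by (auto simp: indicator_def ennreal_mult[symmetric])
      qed
      finally show "(\<integral>\<^sup>+ y. ennreal (w (x, y)) * indicator (S \<times> UNIV) (x, y) \<partial>\<rho>) = indicator S x" .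
    qed
    also have "\<dots> = emeasure \<nu> S" using S sn by simp
    finally show "emeasure (distr \<pi> borel fst) S = emeasure \<nu> S" .
  qed
  have m2: "distr \<pi> borel snd = \<rho>"
  proof (rule measure_eqI)
    show "sets (distr \<pi> borel snd) = sets \<rho>" using sr by simp
    fix S assume "S \<in> sets (distr \<pi> borel snd)"
    then have S: "S \<in> sets borel" by simp
    have S': "UNIV \<times> S \<in> sets (\<nu> \<Otimes>\<^sub>M \<rho>)" unfolding sp using S by auto
    have "emeasure (distr \<pi> borel snd) S = emeasure \<pi> (UNIV \<times> S)"
      using S by (subst emeasure_distr[OF sndm S]) (auto simp: sp\<pi> intro!: arg_cong[where f="emeasure \<pi>"])
    also have "\<dots> = (\<integral>\<^sup>+ p. ennreal (w p) * indicator (UNIV \<times> S) p \<partial>(\<nu> \<Otimes>\<^sub>M \<rho>))"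
      unfolding \<pi>_def by (rule emeasure_density[OF wm S'])
    also have "\<dots> = (\<integral>\<^sup>+ y. \<integral>\<^sup>+ x. ennreal (w (x, y)) * indicator (UNIV \<times> S) (x, y) \<partial>\<nu> \<partial>\<rho>)"
    proof (intro nn_integral_snd[symmetric])
      note [measurable] = wm' S'
      show "(\<lambda>p. ennreal (w p) * indicator (UNIV \<times> S) p) \<in> borel_measurable (\<nu> \<Otimes>\<^sub>M \<rho>)" by measurable
    qed
    also have "\<dots> = (\<integral>\<^sup>+ y. indicator S y \<partial>\<rho>)"
    proof (intro nn_integral_cong_AE)
      show "AE y in \<rho>. (\<integral>\<^sup>+ x. ennreal (w (x, y)) * indicator (UNIV \<times> S) (x, y) \<partial>\<nu>) = indicator S y"
        using TZ
      proof eventually_elim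
        case (elim y)
        have "(\<integral>\<^sup>+ x. ennreal (w (x, y)) * indicator (UNIV \<times> S) (x, y) \<partial>\<nu>)
            = (\<integral>\<^sup>+ x. ennreal (indicator S y / b (T y)) * indicator (A -` {T y}) x \<partial>\<nu>)"
          by (intro nn_integral_cong) (auto simp: w_eq indicator_def)
        also have "\<dots> = ennreal (indicator S y / b (T y)) * emeasure \<nu> (A -` {T y})"
          using Am by (intro nn_integral_cmult_indicator) (auto simp: sn measurable_sets_borel)
        also have "\<dots> = indicator S y"
        proof -
          have "b (T y) > 0" using pos elim unfolding b_def by auto
          moreover have "emeasure \<nu> (A -` {T y}) = ennreal (b (T y))"
            using eq[OF elim] unfolding b_def by (simp add: n.emeasure_eq_measure)
          ultimately show ?thesis
            by (auto simp: indicator_def ennreal_mult[symmetric])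
        qed
        finally show ?case .
      qed
    qed
    also have "\<dots> = emeasure \<rho> S" using S sr by simp
    finally show "emeasure (distr \<pi> borel snd) S = emeasure \<rho> S" .
  qed
  have "prob_space \<pi>"
  proof
    have "emeasure \<pi> (space \<pi>) = emeasure (distr \<pi> borel fst) UNIV"
      by (subst emeasure_distr[OF fstm]) (auto simp: sp\<pi>)
    also have "\<dots> = 1" unfolding m1 using n.emeasure_space_1 spn by simp
    finally show "emeasure \<pi> (space \<pi>) = 1" .
  qed
  then have cp: "\<pi> \<in> couplings \<nu> \<rho>" unfolding couplings_def using s\<pi> m1 m2 by auto
  have "AE p in \<pi>. A (fst p) = T (snd p)"
    unfolding \<pi>_def
  proof (subst AE_density[OF wm], intro AE_I2 impI)
    fix p :: "'a \<times> 'a" assume "0 < ennreal (w p)"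
    then have "w p \<noteq> 0" by auto
    then show "A (fst p) = T (snd p)" using w_eq[of "fst p" "snd p"] by (cases "A (fst p) = T (snd p)") auto
  qed
  then show ?thesis using cp by blast
qed

lemma hyper_null:
  fixes \<nu> :: "'a::euclidean_space measure"
  assumes ac: "absolutely_continuous lborel \<nu>" and sn: "sets \<nu> = sets borel" and a: "a \<noteq> 0"
  shows "{x. inner a x = c} \<in> null_sets \<nu>"
proof -
  have "negligible {x. inner a x = c}" using negligible_hyperplane[of a c] a by simp
  then have "{x. inner a x = c} \<in> null_sets lebesgue" by (simp add: negligible_iff_null_sets)
  moreover have "{x. inner a x = c} \<in> sets borel"
    by (intro borel_closed closed_hyperplane)
  ultimately have "{x. inner a x = c} \<in> null_sets lborel"
    using null_sets_completion_iff[of "{x. inner a x = c}" lborel] by simp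
  then show ?thesis using ac unfolding absolutely_continuous_def by auto
qed

lemma finite_BW:
  fixes s :: "nat \<Rightarrow> 'a \<Rightarrow> real"
  assumes "finite Z" "\<And>k z. z \<in> Z \<Longrightarrow> \<bar>s k z\<bar> \<le> R"
  shows "\<exists>r l. strict_mono r \<and> (\<forall>z\<in>Z. (\<lambda>k. s (r k) z) \<longlonglongrightarrow> l z)"
  using assms
proof (induction Z arbitrary: s rule: finite_induct)
  case empty
  show ?case by (intro exI[of _ id] exI[of _ "\<lambda>_. 0"]) (auto simp: strict_mono_def)
next
  case (insert a Z)
  obtain r l where r: "strict_mono r" "\<forall>z\<in>Z. (\<lambda>k. s (r k) z) \<longlonglongrightarrow> l z"
    using insert.IH[of s] insert.prems by auto
  have "bounded (range (\<lambda>k. s (r k) a))"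
    using insert.prems[of a] by (intro boundedI[of _ R]) auto
  then obtain la r' where r': "strict_mono r'" "((\<lambda>k. s (r k) a) \<circ> r') \<longlonglongrightarrow> la"
    using bounded_imp_convergent_subsequence by blast
  show ?case
  proof (intro exI conjI)
    show "strict_mono (r \<circ> r')" using r(1) r'(1) by (rule strict_mono_o)
    show "\<forall>z\<in>insert a Z. (\<lambda>k. s ((r \<circ> r') k) z) \<longlonglongrightarrow> (l(a := la)) z"
    proof
      fix z assume z: "z \<in> insert a Z"
      show "(\<lambda>k. s ((r \<circ> r') k) z) \<longlonglongrightarrow> (l(a := la)) z"
      proof (cases "z = a")
        case True then show ?thesis using r'(2) by (simp add: comp_def)
      next
        case False
        then have "z \<in> Z" using z by simp
        then have "(\<lambda>k. s (r k) z) \<longlonglongrightarrow> l z" using r(2) by simp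
        from LIMSEQ_subseq_LIMSEQ[OF this r'(1)] show ?thesis using False by (simp add: comp_def)
      qed
    qed
  qed
qed

locale semidisc =
  fixes \<nu> :: "'a::euclidean_space measure" and Z :: "'a set" and b :: "'a \<Rightarrow> real"
  assumes \<nu>: "\<nu> \<in> borel_prob" and n\<nu>: "integrable \<nu> norm"
    and Z: "finite Z" "Z \<noteq> {}" and bpos: "\<And>z. z \<in> Z \<Longrightarrow> b z > 0" and bsum: "(\<Sum>z\<in>Z. b z) = 1"
begin

definition G :: "('a \<Rightarrow> real) \<Rightarrow> 'a \<Rightarrow> real" where
  "G v x = Max ((\<lambda>z. inner x z - v z) ` Z)"

definition \<Phi> :: "('a \<Rightarrow> real) \<Rightarrow> real" where
  "\<Phi> v = integral\<^sup>L \<nu> (G v) + (\<Sum>z\<in>Z. b z * v z)"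

definition RZ where "RZ = (\<Sum>z\<in>Z. norm z)"
definition E where "E = integral\<^sup>L \<nu> norm"

lemma G_ge: "z \<in> Z \<Longrightarrow> inner x z - v z \<le> G v x"
  unfolding G_def using Z by (intro Max_ge) auto

lemma G_in: "\<exists>z\<in>Z. G v x = inner x z - v z"
proof -
  have "G v x \<in> (\<lambda>z. inner x z - v z) ` Z" unfolding G_def using Z by (intro Max_in) auto
  then show ?thesis by auto
qed

lemma G_le_iff: "G v x \<le> c \<longleftrightarrow> (\<forall>z\<in>Z. inner x z - v z \<le> c)"
  unfolding G_def using Z by (subst Max_le_iff) auto

lemma G_lip1: "G v x - G w x \<le> (\<Sum>z\<in>Z. \<bar>v z - w z\<bar>)"
proof -
  obtain z where z: "z \<in> Z" "G v x = inner x z - v z" using G_in by blast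
  have "\<bar>v z - w z\<bar> \<le> (\<Sum>z\<in>Z. \<bar>v z - w z\<bar>)" using z(1) Z by (intro member_le_sum) auto
  moreover have "inner x z - w z \<le> G w x" by (rule G_ge[OF z(1)])
  ultimately show ?thesis using z(2) by linarith
qed

lemma G_lip: "\<bar>G v x - G w x\<bar> \<le> (\<Sum>z\<in>Z. \<bar>v z - w z\<bar>)"
  using G_lip1[of v x w] G_lip1[of w x v] by (simp add: abs_minus_commute)

lemma G_meas: "G v \<in> borel_measurable borel"
  unfolding G_def[abs_def] using Z by measurable

lemma norm_le_RZ: "z \<in> Z \<Longrightarrow> norm z \<le> RZ"
  unfolding RZ_def using Z by (intro member_le_sum) auto

lemma G_bd: "\<bar>G v x\<bar> \<le> RZ * norm x + (\<Sum>z\<in>Z. \<bar>v z\<bar>)"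
proof -
  obtain z where z: "z \<in> Z" "G v x = inner x z - v z" using G_in by blast
  have "\<bar>inner x z\<bar> \<le> norm x * norm z" by (rule Cauchy_Schwarz_ineq2)
  also have "\<dots> \<le> norm x * RZ" using norm_le_RZ[OF z(1)] by (intro mult_left_mono) auto
  finally have "\<bar>inner x z\<bar> \<le> RZ * norm x" by (simp add: mult.commute)
  moreover have "\<bar>v z\<bar> \<le> (\<Sum>z\<in>Z. \<bar>v z\<bar>)" using z(1) Z by (intro member_le_sum) auto
  ultimately show ?thesis using z(2) by linarith
qed

lemma G_int: "integrable \<nu> (G v)"
  by (rule bp_integrable_bound[OF \<nu> n\<nu> G_meas G_bd])

lemma prob: "prob_space \<nu>" using \<nu> by (auto simp: borel_prob_def)

lemma b_le1: "z \<in> Z \<Longrightarrow> b z \<le> 1"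
proof -
  assume z: "z \<in> Z"
  have "b z \<le> (\<Sum>z\<in>Z. b z)" using z Z bpos by (intro member_le_sum) (auto intro: less_imp_le)
  then show ?thesis using bsum by simp
qed

lemma Phi_lip: "\<bar>\<Phi> v - \<Phi> w\<bar> \<le> 2 * (\<Sum>z\<in>Z. \<bar>v z - w z\<bar>)"
proof -
  interpret prob_space \<nu> by (rule prob)
  let ?D = "(\<Sum>z\<in>Z. \<bar>v z - w z\<bar>)"
  have "\<bar>integral\<^sup>L \<nu> (G v) - integral\<^sup>L \<nu> (G w)\<bar> = \<bar>integral\<^sup>L \<nu> (\<lambda>x. G v x - G w x)\<bar>"
    using G_int by (simp add: Bochner_Integration.integral_diff)
  also have "\<dots> \<le> integral\<^sup>L \<nu> (\<lambda>x. ?D)"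
    using G_lip G_int by (intro integral_abs_bound_integral) auto
  also have "\<dots> = ?D" by (simp add: prob_space)
  finally have 1: "\<bar>integral\<^sup>L \<nu> (G v) - integral\<^sup>L \<nu> (G w)\<bar> \<le> ?D" .
  have "\<bar>(\<Sum>z\<in>Z. b z * v z) - (\<Sum>z\<in>Z. b z * w z)\<bar> = \<bar>\<Sum>z\<in>Z. b z * (v z - w z)\<bar>"
    by (simp add: sum_subtractf algebra_simps)
  also have "\<dots> \<le> (\<Sum>z\<in>Z. \<bar>b z * (v z - w z)\<bar>)" by (rule sum_abs)
  also have "\<dots> \<le> ?D"
  proof (intro sum_mono)
    fix z assume "z \<in> Z"
    then have "0 < b z" "b z \<le> 1" using bpos b_le1 by auto
    then show "\<bar>b z * (v z - w z)\<bar> \<le> \<bar>v z - w z\<bar>"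
      by (simp add: abs_mult mult_left_le_one_le)
  qed
  finally have 2: "\<bar>(\<Sum>z\<in>Z. b z * v z) - (\<Sum>z\<in>Z. b z * w z)\<bar> \<le> ?D" .
  show ?thesis using 1 2 unfolding \<Phi>_def by linarith
qed

lemma G_shift: "G (\<lambda>z. v z + t) x = G v x - t"
proof -
  have "G (\<lambda>z. v z + t) x = Max ((\<lambda>z. (inner x z - v z) + (- t)) ` Z)"
    unfolding G_def by (simp add: algebra_simps)
  also have "\<dots> = G v x + (- t)" unfolding G_def by (rule Max_add_commute[OF Z])
  finally show ?thesis by simp
qed

lemma Phi_shift: "\<Phi> (\<lambda>z. v z + t) = \<Phi> v"
proof -
  interpret prob_space \<nu> by (rule prob)
  have "integral\<^sup>L \<nu> (G (\<lambda>z. v z + t)) = integral\<^sup>L \<nu> (G v) - t"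
    unfolding G_shift using G_int by (simp add: Bochner_Integration.integral_diff prob_space)
  moreover have "(\<Sum>z\<in>Z. b z * (v z + t)) = (\<Sum>z\<in>Z. b z * v z) + t"
  proof -
    have "(\<Sum>z\<in>Z. b z * (v z + t)) = (\<Sum>z\<in>Z. b z * v z) + (\<Sum>z\<in>Z. b z) * t"
      by (simp add: algebra_simps sum.distrib sum_distrib_right sum_distrib_left)
    then show ?thesis using bsum by simp
  qed
  ultimately show ?thesis unfolding \<Phi>_def by simp
qed

lemma Phi_cong: "(\<And>z. z \<in> Z \<Longrightarrow> v z = w z) \<Longrightarrow> \<Phi> v = \<Phi> w"
proof -
  assume h: "\<And>z. z \<in> Z \<Longrightarrow> v z = w z"
  have "G v = G w" unfolding G_def[abs_def] using h by (intro ext arg_cong[where f=Max] image_cong) auto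
  moreover have "(\<Sum>z\<in>Z. b z * v z) = (\<Sum>z\<in>Z. b z * w z)" using h by simp
  ultimately show ?thesis unfolding \<Phi>_def by simp
qed

end

context semidisc
begin

lemma E_nn: "0 \<le> E" unfolding E_def by simp
lemma RZ_nn: "0 \<le> RZ" unfolding RZ_def by (simp add: sum_nonneg)

lemma G_lower: "z0 \<in> Z \<Longrightarrow> - RZ * norm x - v z0 \<le> G v x"
proof -
  assume z0: "z0 \<in> Z"
  have "\<bar>inner x z0\<bar> \<le> norm x * norm z0" by (rule Cauchy_Schwarz_ineq2)
  also have "\<dots> \<le> norm x * RZ" using norm_le_RZ[OF z0] by (intro mult_left_mono) auto
  finally have "- RZ * norm x \<le> inner x z0" by (simp add: mult.commute abs_le_iff)
  then show ?thesis using G_ge[OF z0, of x v] by simp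
qed

lemma int_G_lower: "z0 \<in> Z \<Longrightarrow> - RZ * E - v z0 \<le> integral\<^sup>L \<nu> (G v)"
proof -
  assume z0: "z0 \<in> Z"
  interpret prob_space \<nu> by (rule prob)
  have "integral\<^sup>L \<nu> (\<lambda>x. - RZ * norm x - v z0) \<le> integral\<^sup>L \<nu> (G v)"
    using G_lower[OF z0] G_int n\<nu> by (intro integral_mono) auto
  moreover have "integral\<^sup>L \<nu> (\<lambda>x. - RZ * norm x - v z0) = - RZ * E - v z0"
    using n\<nu> unfolding E_def by (simp add: Bochner_Integration.integral_diff prob_space)
  ultimately show ?thesis by simp
qed

lemma int_G0_upper: "integral\<^sup>L \<nu> (G (\<lambda>_. 0)) \<le> RZ * E"
proof -
  have "G (\<lambda>_. 0) x \<le> RZ * norm x" for x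
    using G_bd[of "\<lambda>_. 0" x] by simp
  then have "integral\<^sup>L \<nu> (G (\<lambda>_. 0)) \<le> integral\<^sup>L \<nu> (\<lambda>x. RZ * norm x)"
    using G_int n\<nu> by (intro integral_mono) auto
  then show ?thesis unfolding E_def by simp
qed

definition bmin where "bmin = Min (b ` Z)"
lemma bmin_pos: "0 < bmin" unfolding bmin_def using Z bpos by (subst Min_gr_iff) auto
lemma bmin_le: "z \<in> Z \<Longrightarrow> bmin \<le> b z" unfolding bmin_def using Z by (intro Min_le) auto

definition R where "R = (2 * RZ * E + 1) / bmin"
lemma R_nn: "0 \<le> R" unfolding R_def using bmin_pos RZ_nn E_nn by simp

definition S where "S = {v. \<forall>z\<in>Z. 0 \<le> v z \<and> v z \<le> R}"

lemma Phi0: "\<Phi> (\<lambda>_. 0) \<le> RZ * E" unfolding \<Phi>_def using int_G0_upper by simp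

lemma coercive:
  assumes nn: "\<And>z. z \<in> Z \<Longrightarrow> 0 \<le> v z" and z0: "z0 \<in> Z" "v z0 = 0" and z1: "z1 \<in> Z" "R < v z1"
  shows "\<Phi> (\<lambda>_. 0) < \<Phi> v"
proof -
  have "b z1 * v z1 \<le> (\<Sum>z\<in>Z. b z * v z)"
  proof (rule member_le_sum[OF z1(1) _ Z(1)])
    fix z assume "z \<in> Z - {z1}"
    then have "0 < b z" "0 \<le> v z" using bpos nn by auto
    then show "0 \<le> b z * v z" by simp
  qed
  moreover have "bmin * R \<le> b z1 * v z1"
    using bmin_le[OF z1(1)] z1(2) R_nn bmin_pos by (intro mult_mono) auto
  moreover have "bmin * R = 2 * RZ * E + 1" unfolding R_def using bmin_pos by simp
  moreover have "- RZ * E \<le> integral\<^sup>L \<nu> (G v)" using int_G_lower[OF z0(1), of v] z0(2) by simp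
  ultimately have "RZ * E + 1 \<le> \<Phi> v" unfolding \<Phi>_def by linarith
  then show ?thesis using Phi0 by linarith
qed

lemma Phi_lower_S: "v \<in> S \<Longrightarrow> - RZ * E - R \<le> \<Phi> v"
proof -
  assume v: "v \<in> S"
  obtain z0 where z0: "z0 \<in> Z" using Z by auto
  have "0 \<le> (\<Sum>z\<in>Z. b z * v z)"
  proof (rule sum_nonneg)
    fix z assume "z \<in> Z"
    then have "0 < b z" "0 \<le> v z" using bpos v unfolding S_def by auto
    then show "0 \<le> b z * v z" by simp
  qed
  moreover have "- RZ * E - v z0 \<le> integral\<^sup>L \<nu> (G v)" by (rule int_G_lower[OF z0])
  moreover have "v z0 \<le> R" using v z0 unfolding S_def by auto
  ultimately show ?thesis unfolding \<Phi>_def by linarith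
qed

lemma zero_S: "(\<lambda>_. 0) \<in> S" unfolding S_def using R_nn by auto

lemma min_on_S: "\<exists>v\<in>S. \<forall>w\<in>S. \<Phi> v \<le> \<Phi> w"
proof -
  define m where "m = Inf (\<Phi> ` S)"
  have ne: "\<Phi> ` S \<noteq> {}" using zero_S by auto
  have bdd: "bdd_below (\<Phi> ` S)" using Phi_lower_S by (intro bdd_belowI[of _ "- RZ * E - R"]) auto
  have "\<exists>s\<in>S. \<Phi> s < m + inverse (real (Suc k))" for k
  proof -
    have "Inf (\<Phi> ` S) < m + inverse (real (Suc k))" unfolding m_def by simp
    from cInf_lessD[OF ne this] show ?thesis by auto
  qed
  then obtain s where s: "\<And>k. s k \<in> S" "\<And>k. \<Phi> (s k) < m + inverse (real (Suc k))" by metis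
  have "\<bar>s k z\<bar> \<le> R" if "z \<in> Z" for k z using s(1)[of k] that unfolding S_def by auto
  then obtain r l where r: "strict_mono r" "\<And>z. z \<in> Z \<Longrightarrow> (\<lambda>k. s (r k) z) \<longlonglongrightarrow> l z"
    using finite_BW[OF Z(1), of s R] by blast
  define l' where "l' z = (if z \<in> Z then l z else 0)" for z
  have l'S: "l' \<in> S"
    unfolding S_def
  proof (intro CollectI ballI conjI)
    fix z assume z: "z \<in> Z"
    have lim: "(\<lambda>k. s (r k) z) \<longlonglongrightarrow> l' z" using r(2)[OF z] z by (simp add: l'_def)
    show "0 \<le> l' z" using s(1) z unfolding S_def by (intro LIMSEQ_le_const[OF lim]) auto
    show "l' z \<le> R" using s(1) z unfolding S_def by (intro LIMSEQ_le_const2[OF lim]) auto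
  qed
  have sumlim: "(\<lambda>k. 2 * (\<Sum>z\<in>Z. \<bar>s (r k) z - l' z\<bar>)) \<longlonglongrightarrow> 0"
  proof -
    have "(\<lambda>k. \<bar>s (r k) z - l' z\<bar>) \<longlonglongrightarrow> 0" if z: "z \<in> Z" for z
    proof -
      have "(\<lambda>k. s (r k) z) \<longlonglongrightarrow> l' z" using r(2)[OF z] z by (simp add: l'_def)
      then have "(\<lambda>k. s (r k) z - l' z) \<longlonglongrightarrow> 0" by (simp add: Lim_null[symmetric])
      then show ?thesis by (rule tendsto_rabs_zero)
    qed
    then have "(\<lambda>k. \<Sum>z\<in>Z. \<bar>s (r k) z - l' z\<bar>) \<longlonglongrightarrow> (\<Sum>z\<in>Z. 0)" by (intro tendsto_sum) auto
    then show ?thesis using tendsto_mult_right_zero[of _ sequentially 2] by auto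
  qed
  have "(\<lambda>k. \<Phi> (s (r k)) - \<Phi> l') \<longlonglongrightarrow> 0"
    by (rule Lim_null_comparison[OF _ sumlim]) (use Phi_lip in auto)
  then have Plim: "(\<lambda>k. \<Phi> (s (r k))) \<longlonglongrightarrow> \<Phi> l'" by (simp add: Lim_null[symmetric])
  have mlim: "(\<lambda>k. m + inverse (real (Suc k))) \<longlonglongrightarrow> m"
    using tendsto_add[OF tendsto_const[of m] LIMSEQ_inverse_real_of_nat] by simp
  have "\<Phi> l' \<le> m"
  proof (rule LIMSEQ_le[OF Plim mlim], intro exI allI impI)
    fix k :: nat
    have "k \<le> r k" using r(1) by (rule seq_suble)
    then have "inverse (real (Suc (r k))) \<le> inverse (real (Suc k))"
      by (intro le_imp_inverse_le) auto
    then show "\<Phi> (s (r k)) \<le> m + inverse (real (Suc k))" using s(2)[of "r k"] by linarith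
  qed
  moreover have "m \<le> \<Phi> w" if "w \<in> S" for w unfolding m_def using bdd that by (intro cInf_lower) auto
  ultimately show ?thesis using l'S by force
qed

lemma global_min: "\<exists>v. \<forall>w. \<Phi> v \<le> \<Phi> w"
proof -
  obtain v where v: "v \<in> S" "\<And>w. w \<in> S \<Longrightarrow> \<Phi> v \<le> \<Phi> w" using min_on_S by blast
  have "\<Phi> v \<le> \<Phi> w" for w
  proof -
    define t where "t = Min (w ` Z)"
    define w' where "w' z = w z + (- t)" for z
    have eq: "\<Phi> w' = \<Phi> w" unfolding w'_def by (rule Phi_shift)
    have nn: "0 \<le> w' z" if zZ: "z \<in> Z" for z
    proof -
      have "t \<le> w z" unfolding t_def using zZ Z by (intro Min_le) auto
      then show ?thesis unfolding w'_def by simp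
    qed
    obtain z0 where z0: "z0 \<in> Z" "w' z0 = 0"
    proof -
      have "t \<in> w ` Z" unfolding t_def using Z by (intro Min_in) auto
      then obtain z0 where "z0 \<in> Z" "t = w z0" by auto
      then show ?thesis using that unfolding w'_def by auto
    qed
    show ?thesis
    proof (cases "\<forall>z\<in>Z. w' z \<le> R")
      case True
      then have "w' \<in> S" unfolding S_def using nn by auto
      then have "\<Phi> v \<le> \<Phi> w'" by (rule v(2))
      then show ?thesis using eq by simp
    next
      case False
      then obtain z1 where z1: "z1 \<in> Z" "R < w' z1" by auto
      have "\<Phi> (\<lambda>_. 0) < \<Phi> w'" by (rule coercive[where v=w', OF nn z0 z1])
      moreover have "\<Phi> v \<le> \<Phi> (\<lambda>_. 0)" using v(2)[OF zero_S] .
      ultimately show ?thesis using eq by simp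
    qed
  qed
  then show ?thesis by blast
qed

end

context semidisc
begin

lemma sp\<nu>: "space \<nu> = UNIV"
  using \<nu> sets_eq_imp_space_eq[of \<nu> borel] by (auto simp: borel_prob_def)

lemma sets\<nu>: "sets \<nu> = sets borel" using \<nu> by (auto simp: borel_prob_def)

definition Cs where "Cs v z s = {x. \<forall>z'\<in>Z. inner x z' - v z' \<le> inner x z - v z + s}"

lemma Cs_sets: "Cs v z s \<in> sets \<nu>"
proof -
  have "Cs v z s = (\<Inter>z'\<in>Z. {x. inner (z' - z) x \<le> v z' - v z + s})"
    unfolding Cs_def by (auto simp: inner_diff_left inner_commute algebra_simps)
  moreover have "closed (\<Inter>z'\<in>Z. {x. inner (z' - z) x \<le> v z' - v z + s})"
    by (intro closed_INT ballI closed_halfspace_le)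
  ultimately show ?thesis using sets\<nu> by (simp add: borel_closed)
qed

lemma step:
  assumes vmin: "\<And>w. \<Phi> v \<le> \<Phi> w" and z: "z \<in> Z" and s: "0 < s"
  shows "b z \<le> measure \<nu> (Cs v z s)"
proof -
  interpret prob_space \<nu> by (rule prob)
  define w where "w z' = v z' - s * indicator {z} z'" for z'
  have pw: "G w x - G v x \<le> s * indicator (Cs v z s) x" for x
  proof -
    obtain z'' where z'': "z'' \<in> Z" "G w x = inner x z'' - w z''" using G_in by blast
    show ?thesis
    proof (cases "z'' = z")
      case True
      then have Gw: "G w x = inner x z - v z + s" using z'' by (simp add: w_def)
      show ?thesis
      proof (cases "x \<in> Cs v z s")
        case True
        then show ?thesis using Gw G_ge[OF z, of x v] by simp
      next
        case False
        then obtain z' where z': "z' \<in> Z" "inner x z' - v z' > inner x z - v z + s"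
          unfolding Cs_def by auto
        then have "z' \<noteq> z" using s by auto
        then have "inner x z' - w z' = inner x z' - v z'" by (simp add: w_def)
        moreover have "inner x z' - w z' \<le> G w x" by (rule G_ge[OF z'(1)])
        ultimately show ?thesis using z'(2) Gw by simp
      qed
    next
      case False
      then have "G w x = inner x z'' - v z''" using z'' by (simp add: w_def)
      also have "\<dots> \<le> G v x" by (rule G_ge[OF z''(1)])
      finally show ?thesis using s by (simp add: indicator_def)
    qed
  qed
  have sumw: "(\<Sum>z'\<in>Z. b z' * w z') = (\<Sum>z'\<in>Z. b z' * v z') - s * b z"
  proof -
    have "(\<Sum>z'\<in>Z. b z' * w z') = (\<Sum>z'\<in>Z. b z' * v z' - s * (if z' = z then b z' else 0))"
      unfolding w_def by (intro sum.cong) (auto simp: indicator_def algebra_simps)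
    also have "\<dots> = (\<Sum>z'\<in>Z. b z' * v z') - s * (\<Sum>z'\<in>Z. if z' = z then b z' else 0)"
      by (simp add: sum_subtractf sum_distrib_left)
    also have "(\<Sum>z'\<in>Z. if z' = z then b z' else 0) = b z" using Z z by (simp add: sum.delta')
    finally show ?thesis .
  qed
  have "\<Phi> v \<le> \<Phi> w" by (rule vmin)
  then have "s * b z \<le> integral\<^sup>L \<nu> (G w) - integral\<^sup>L \<nu> (G v)"
    unfolding \<Phi>_def sumw by simp
  also have "\<dots> = integral\<^sup>L \<nu> (\<lambda>x. G w x - G v x)"
    using G_int by (simp add: Bochner_Integration.integral_diff)
  also have "\<dots> \<le> integral\<^sup>L \<nu> (\<lambda>x. s * indicator (Cs v z s) x)"
  proof -
    have "integrable \<nu> (indicator (Cs v z s) :: 'a \<Rightarrow> real)"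
      using Cs_sets by (intro integrable_real_indicator) (auto simp: emeasure_eq_measure)
    then show ?thesis
      using pw G_int by (intro integral_mono) (auto intro!: integrable_mult_right)
  qed
  also have "\<dots> = s * measure \<nu> (Cs v z s)"
    using Cs_sets sp\<nu> by simp
  finally show ?thesis using s by simp
qed

lemma b_le_C0:
  assumes vmin: "\<And>w. \<Phi> v \<le> \<Phi> w" and z: "z \<in> Z"
  shows "b z \<le> measure \<nu> (Cs v z 0)"
proof -
  interpret prob_space \<nu> by (rule prob)
  define A where "A k = Cs v z (inverse (real (Suc k)))" for k
  have dec: "decseq A"
    unfolding decseq_def A_def Cs_def
  proof (intro allI impI subsetI CollectI ballI)
    fix m n :: nat and x z' assume mn: "m \<le> n" and x: "x \<in> {x. \<forall>z'\<in>Z. inner x z' - v z' \<le> inner x z - v z + inverse (real (Suc n))}"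
      and z': "z' \<in> Z"
    have "inverse (real (Suc n)) \<le> inverse (real (Suc m))" using mn by (intro le_imp_inverse_le) auto
    moreover have "inner x z' - v z' \<le> inner x z - v z + inverse (real (Suc n))" using x z' by blast
    ultimately show "inner x z' - v z' \<le> inner x z - v z + inverse (real (Suc m))" by linarith
  qed
  have inter: "(\<Inter>k. A k) = Cs v z 0"
  proof
    show "Cs v z 0 \<subseteq> (\<Inter>k. A k)" unfolding A_def Cs_def
      by (auto intro: order_trans[OF _ add_increasing2[OF less_imp_le[OF positive_imp_inverse_positive]]])
    show "(\<Inter>k. A k) \<subseteq> Cs v z 0"
    proof
      fix x assume x: "x \<in> (\<Inter>k. A k)"
      show "x \<in> Cs v z 0" unfolding Cs_def
      proof (intro CollectI ballI)
        fix z' assume z': "z' \<in> Z"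
        show "inner x z' - v z' \<le> inner x z - v z + 0"
        proof (rule field_le_epsilon)
          fix e :: real assume e: "0 < e"
          obtain k where k: "inverse (real (Suc k)) < e" using reals_Archimedean[OF e] by blast
          have "x \<in> A k" using x by auto
          then have "inner x z' - v z' \<le> inner x z - v z + inverse (real (Suc k))"
            unfolding A_def Cs_def using z' by auto
          then show "inner x z' - v z' \<le> inner x z - v z + 0 + e" using k by simp
        qed
      qed
    qed
  qed
  have "range A \<subseteq> sets \<nu>" unfolding A_def using Cs_sets by auto
  from finite_Lim_measure_decseq[OF this dec] have lim: "(\<lambda>k. measure \<nu> (A k)) \<longlonglongrightarrow> measure \<nu> (Cs v z 0)"
    unfolding inter .
  show ?thesis
    by (rule LIMSEQ_le_const[OF lim]) (use step[OF vmin z] in \<open>auto simp: A_def\<close>)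
qed

end

context semidisc
begin

lemma masses:
  assumes ac: "absolutely_continuous lborel \<nu>"
  obtains v A where "A \<in> borel_measurable borel" "\<And>x. A x \<in> Z"
    "\<And>x. inner x (A x) - v (A x) = G v x" "\<And>z. z \<in> Z \<Longrightarrow> measure \<nu> (A -` {z}) = b z"
proof -
  interpret prob_space \<nu> by (rule prob)
  obtain v where vmin: "\<And>w. \<Phi> v \<le> \<Phi> w" using global_min by blast
  obtain zs where zs: "set zs = Z" "distinct zs" using finite_distinct_list[OF Z(1)] by blast
  define P where "P i x = (i < length zs \<and> inner x (zs ! i) - v (zs ! i) = G v x)" for i x
  define A where "A x = zs ! (LEAST i. P i x)" for x
  have Aprop: "A x \<in> Z \<and> inner x (A x) - v (A x) = G v x" for x
  proof -
    obtain z where z: "z \<in> Z" "G v x = inner x z - v z" using G_in by blast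
    then obtain i where i: "i < length zs" "zs ! i = z" using zs(1) by (auto simp: in_set_conv_nth)
    have "P i x" unfolding P_def using i z by simp
    then have "P (LEAST i. P i x) x" by (rule LeastI[where P="\<lambda>i. P i x"])
    then show ?thesis unfolding A_def P_def using zs(1) by auto
  qed
  have Gm: "G v \<in> borel_measurable borel" by (rule G_meas)
  have idxm: "(\<lambda>x. LEAST i. P i x) \<in> measurable borel (count_space UNIV)"
    unfolding P_def using Gm by measurable
  have Am: "A \<in> borel_measurable borel"
    unfolding A_def by (rule measurable_compose[OF idxm]) simp
  define H where "H = (\<Union>z1\<in>Z. \<Union>z2\<in>Z - {z1}. {x. inner (z1 - z2) x = v z1 - v z2})"
  have Hnull: "H \<in> null_sets \<nu>"
    unfolding H_def
  proof (intro null_sets_UN' countable_finite Z(1) finite_Diff)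
    fix z1 z2 assume "z1 \<in> Z" "z2 \<in> Z - {z1}"
    then have "z1 - z2 \<noteq> 0" by auto
    then show "{x. inner (z1 - z2) x = v z1 - v z2} \<in> null_sets \<nu>"
      by (rule hyper_null[OF ac sets\<nu>])
  qed
  have Apre: "Cs v z 0 - H \<subseteq> A -` {z}" if z: "z \<in> Z" for z
  proof
    fix x assume x: "x \<in> Cs v z 0 - H"
    have "G v x \<le> inner x z - v z" using x unfolding Cs_def G_le_iff by auto
    then have Gz: "G v x = inner x z - v z" using G_ge[OF z, of x v] by simp
    show "x \<in> A -` {z}"
    proof (rule ccontr)
      assume "x \<notin> A -` {z}"
      then have ne: "A x \<noteq> z" by simp
      have "inner (A x - z) x = v (A x) - v z"
        using Aprop[of x] Gz by (simp add: inner_diff_left inner_diff_right inner_commute algebra_simps)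
      then have "x \<in> H" unfolding H_def using Aprop[of x] ne z by blast
      then show False using x by simp
    qed
  qed
  have Asets: "A -` {z} \<in> sets \<nu>" for z
    using Am sets\<nu> by (simp add: measurable_sets_borel)
  have ge: "b z \<le> measure \<nu> (A -` {z})" if z: "z \<in> Z" for z
  proof -
    have "b z \<le> measure \<nu> (Cs v z 0)" by (rule b_le_C0[OF vmin z])
    also have "\<dots> = measure \<nu> (Cs v z 0 - H)" using Cs_sets Hnull by (simp add: measure_Diff_null_set)
    also have "\<dots> \<le> measure \<nu> (A -` {z})" using Apre[OF z] Asets by (intro finite_measure_mono) auto
    finally show ?thesis .
  qed
  have "(\<Sum>z\<in>Z. measure \<nu> (A -` {z})) = measure \<nu> (\<Union>z\<in>Z. A -` {z})"
    using Asets Z(1) by (intro measure_finite_Union[symmetric]) (auto simp: disjoint_family_on_def emeasure_eq_measure)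
  also have "(\<Union>z\<in>Z. A -` {z}) = space \<nu>" using Aprop sp\<nu> by auto
  also have "measure \<nu> (space \<nu>) = 1" by (rule prob_space)
  finally have tot: "(\<Sum>z\<in>Z. measure \<nu> (A -` {z})) = 1" .
  have "(\<Sum>z\<in>Z. measure \<nu> (A -` {z}) - b z) = 0" using tot bsum by (simp add: sum_subtractf)
  then have "\<forall>z\<in>Z. measure \<nu> (A -` {z}) - b z = 0"
    using sum_nonneg_eq_0_iff[OF Z(1), of "\<lambda>z. measure \<nu> (A -` {z}) - b z"] ge by auto
  then have "\<And>z. z \<in> Z \<Longrightarrow> measure \<nu> (A -` {z}) = b z" by auto
  then show ?thesis using that[OF Am] Aprop by blast
qed

end

lemma semidiscrete:
  fixes \<nu> :: "'a::euclidean_space measure" and Z :: "'a set" and b :: "'a \<Rightarrow> real"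
  assumes "\<nu> \<in> borel_prob" "integrable \<nu> norm" "absolutely_continuous lborel \<nu>"
    "finite Z" "Z \<noteq> {}" "\<And>z. z \<in> Z \<Longrightarrow> b z > 0" "(\<Sum>z\<in>Z. b z) = 1"
  obtains v A where "A \<in> borel_measurable borel" "\<And>x. A x \<in> Z"
    "\<And>x. inner x (A x) - v (A x) = Max ((\<lambda>z. inner x z - v z) ` Z)"
    "\<And>z. z \<in> Z \<Longrightarrow> measure \<nu> (A -` {z}) = b z"
proof -
  interpret semidisc \<nu> Z b using assms by unfold_locales auto
  show ?thesis using masses[OF assms(3)] that unfolding G_def by metis
qed

lemma max_affine_lip1:
  fixes Z :: "'a::euclidean_space set" and v :: "'a \<Rightarrow> real"
  assumes Z: "finite Z" "Z \<noteq> {}" and Z1: "\<And>z. z \<in> Z \<Longrightarrow> norm z \<le> 1"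
  shows "(\<lambda>x. Max ((\<lambda>z. inner x z - v z) ` Z)) \<in> convex_lip1"
proof -
  define f where "f x = Max ((\<lambda>z. inner x z - v z) ` Z)" for x
  have ge: "inner x z - v z \<le> f x" if "z \<in> Z" for x z unfolding f_def using that Z by (intro Max_ge) auto
  have inn: "\<exists>z\<in>Z. f x = inner x z - v z" for x
  proof -
    have "f x \<in> (\<lambda>z. inner x z - v z) ` Z" unfolding f_def using Z by (intro Max_in) auto
    then show ?thesis by auto
  qed
  have lip: "f x - f x' \<le> norm (x - x')" for x x'
  proof -
    obtain z where z: "z \<in> Z" "f x = inner x z - v z" using inn by blast
    have "inner (x - x') z \<le> norm (x - x') * norm z" using Cauchy_Schwarz_ineq2[of "x - x'" z] by linarith
    also have "\<dots> \<le> norm (x - x')" using Z1[OF z(1)] by (simp add: mult_left_le)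
    finally show ?thesis using ge[OF z(1), of x'] z(2) by (simp add: inner_diff_left)
  qed
  have cvx: "convex_on UNIV f"
  proof (rule convex_onI)
    fix t :: real and x y :: 'a assume t: "0 < t" "t < 1"
    obtain z where z: "z \<in> Z" "f ((1 - t) *\<^sub>R x + t *\<^sub>R y) = inner ((1 - t) *\<^sub>R x + t *\<^sub>R y) z - v z"
      using inn by blast
    have "inner ((1 - t) *\<^sub>R x + t *\<^sub>R y) z - v z = (1 - t) * (inner x z - v z) + t * (inner y z - v z)"
      by (simp add: inner_add_left algebra_simps)
    also have "\<dots> \<le> (1 - t) * f x + t * f y"
      using t ge[OF z(1)] by (intro add_mono mult_left_mono) auto
    finally show "f ((1 - t) *\<^sub>R x + t *\<^sub>R y) \<le> (1 - t) * f x + t * f y" using z(2) by simp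
  qed simp
  have sub: "norm y \<le> 1" if y: "y \<in> subdiff f x" for x y
  proof -
    have "inner y ((x + y) - x) \<le> f (x + y) - f x" using y unfolding subdiff_def by blast
    then have "norm y ^ 2 \<le> norm y" using lip[of "x + y" x] by (simp add: power2_norm_eq_inner)
    then show ?thesis by (cases "norm y = 0") (auto simp: power2_eq_square)
  qed
  show ?thesis unfolding convex_lip1_def f_def[symmetric] using cvx sub by blast
qed

lemma int_fin_sum:
  fixes \<alpha> :: "'a::euclidean_space measure" and T :: "'a \<Rightarrow> 'a"
  assumes \<alpha>: "\<alpha> \<in> borel_prob" and Tm: "T \<in> borel_measurable borel" and Z: "finite Z"
  shows "integrable \<alpha> (\<lambda>y. if T y \<in> Z then v (T y) else 0)"
    and "integral\<^sup>L \<alpha> (\<lambda>y. if T y \<in> Z then v (T y) else 0) = (\<Sum>z\<in>Z. v z * measure \<alpha> (T -` {z}))"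
proof -
  interpret prob_space \<alpha> using \<alpha> by (auto simp: borel_prob_def)
  have sa: "sets \<alpha> = sets borel" using \<alpha> by (auto simp: borel_prob_def)
  have spa: "space \<alpha> = UNIV" using sets_eq_imp_space_eq[OF sa] by simp
  have eq: "(\<lambda>y. if T y \<in> Z then v (T y) else 0) = (\<lambda>y. \<Sum>z\<in>Z. v z * indicator (T -` {z}) y)"
  proof
    fix y
    have "(\<Sum>z\<in>Z. v z * indicator (T -` {z}) y) = (\<Sum>z\<in>Z. if z = T y then v z else 0)"
      by (intro sum.cong) (auto simp: indicator_def)
    also have "\<dots> = (if T y \<in> Z then v (T y) else 0)" using Z by (simp add: sum.delta')
    finally show "(if T y \<in> Z then v (T y) else 0) = (\<Sum>z\<in>Z. v z * indicator (T -` {z}) y)" by simp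
  qed
  have Ts: "T -` {z} \<in> sets \<alpha>" for z using Tm sa by (simp add: measurable_sets_borel)
  have ii: "integrable \<alpha> (\<lambda>y. v z * indicator (T -` {z}) y)" for z
    using Ts by (intro integrable_mult_right integrable_real_indicator) (auto simp: emeasure_eq_measure)
  show "integrable \<alpha> (\<lambda>y. if T y \<in> Z then v (T y) else 0)" unfolding eq using ii by auto
  show "integral\<^sup>L \<alpha> (\<lambda>y. if T y \<in> Z then v (T y) else 0) = (\<Sum>z\<in>Z. v z * measure \<alpha> (T -` {z}))"
    unfolding eq using ii by (subst Bochner_Integration.integral_sum) (auto simp: spa)
qed

lemma partB:
  fixes \<mu> \<nu> \<rho> :: "'a::euclidean_space measure"
  assumes \<mu>: "\<mu> \<in> borel_prob" and \<nu>: "\<nu> \<in> borel_prob"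
    and n\<mu>: "integrable \<mu> norm" and n\<nu>: "integrable \<nu> norm"
    and ac: "absolutely_continuous lborel \<nu>"
    and \<rho>: "\<rho> \<in> prob_unit_ball" and e: "e > 0"
  shows "\<exists>f\<in>convex_lip1. integral\<^sup>L \<nu> f - integral\<^sup>L \<mu> f \<le> corr_cost \<nu> \<rho> - corr_cost \<mu> \<rho> + e"
proof -
  define E\<mu> where "E\<mu> = integral\<^sup>L \<mu> norm"
  define E\<nu> where "E\<nu> = integral\<^sup>L \<nu> norm"
  have E\<mu>0: "0 \<le> E\<mu>" and E\<nu>0: "0 \<le> E\<nu>" unfolding E\<mu>_def E\<nu>_def by auto
  define \<delta> where "\<delta> = e / (1 + E\<mu> + E\<nu>)"
  have \<delta>: "0 < \<delta>" unfolding \<delta>_def using e E\<mu>0 E\<nu>0 by simp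
  have \<delta>E: "\<delta> * (E\<mu> + E\<nu>) \<le> e"
  proof -
    have "\<delta> * (E\<mu> + E\<nu>) \<le> \<delta> * (1 + E\<mu> + E\<nu>)" using \<delta> by simp
    also have "\<dots> = e" unfolding \<delta>_def using E\<mu>0 E\<nu>0 by simp
    finally show ?thesis .
  qed
  obtain T :: "'a \<Rightarrow> 'a" where T: "T \<in> borel_measurable borel" "finite (range T)"
    "\<And>y. norm (T y) \<le> 1" "\<And>y. norm y \<le> 1 \<Longrightarrow> norm (T y - y) < \<delta>"
    using quantizer[OF \<delta>] by blast
  have \<rho>b: "\<rho> \<in> borel_prob" using \<rho> by (auto simp: prob_unit_ball_def)
  interpret r: prob_space \<rho> using \<rho>b by (auto simp: borel_prob_def)
  have sr: "sets \<rho> = sets borel" using \<rho>b by (auto simp: borel_prob_def)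
  have spr: "space \<rho> = UNIV" using sets_eq_imp_space_eq[OF sr] by simp
  have Ts: "T -` {z} \<in> sets \<rho>" for z using T(1) sr by (simp add: measurable_sets_borel)
  define bz where "bz z = measure \<rho> (T -` {z})" for z
  define Z where "Z = {z \<in> range T. bz z > 0}"
  have finZ: "finite Z" unfolding Z_def using T(2) by simp
  have bz0: "0 \<le> bz z" for z unfolding bz_def by simp
  have sumR: "(\<Sum>z\<in>range T. bz z) = 1"
  proof -
    have "(\<Sum>z\<in>range T. bz z) = measure \<rho> (\<Union>z\<in>range T. T -` {z})"
      unfolding bz_def using Ts T(2)
      by (intro measure_finite_Union[symmetric]) (auto simp: disjoint_family_on_def r.emeasure_eq_measure)
    also have "(\<Union>z\<in>range T. T -` {z}) = space \<rho>" using spr by auto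
    finally show ?thesis by (simp add: r.prob_space)
  qed
  have sumZ: "(\<Sum>z\<in>Z. bz z) = 1"
  proof -
    have "(\<Sum>z\<in>Z. bz z) = (\<Sum>z\<in>range T. bz z)"
      using T(2) bz0 by (intro sum.mono_neutral_left) (auto simp: Z_def order.order_iff_strict)
    then show ?thesis using sumR by simp
  qed
  have Zne: "Z \<noteq> {}" using sumZ by auto
  have Z1: "norm z \<le> 1" if "z \<in> Z" for z using that T(3) unfolding Z_def by auto
  have TZ: "AE y in \<rho>. T y \<in> Z"
  proof (rule AE_I')
    show "(\<Union>z\<in>range T - Z. T -` {z}) \<in> null_sets \<rho>"
    proof (intro null_sets_UN' countable_finite finite_Diff T(2))
      fix z assume "z \<in> range T - Z"
      then have "bz z = 0" using bz0[of z] unfolding Z_def by auto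
      then show "T -` {z} \<in> null_sets \<rho>"
        using Ts unfolding bz_def by (simp add: r.emeasure_eq_measure null_sets_def)
    qed
    show "{y \<in> space \<rho>. \<not> T y \<in> Z} \<subseteq> (\<Union>z\<in>range T - Z. T -` {z})" by auto
  qed
  have bzpos: "\<And>z. z \<in> Z \<Longrightarrow> bz z > 0" unfolding Z_def by auto
  obtain v A where A: "A \<in> borel_measurable borel" "\<And>x. A x \<in> Z"
    "\<And>x. inner x (A x) - v (A x) = Max ((\<lambda>z. inner x z - v z) ` Z)"
    "\<And>z. z \<in> Z \<Longrightarrow> measure \<nu> (A -` {z}) = bz z"
    by (rule semidiscrete[where b=bz, OF \<nu> n\<nu> ac finZ Zne bzpos sumZ]) blast+
  define f where "f x = Max ((\<lambda>z. inner x z - v z) ` Z)" for x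
  have f1: "f \<in> convex_lip1" unfolding f_def[abs_def] by (rule max_affine_lip1[OF finZ Zne Z1])
  have fge: "inner x z - v z \<le> f x" if "z \<in> Z" for x z unfolding f_def using that finZ by (intro Max_ge) auto
  have fm: "f \<in> borel_measurable borel" unfolding f_def[abs_def] using finZ by measurable
  define K where "K = (\<Sum>z\<in>Z. \<bar>v z\<bar>)"
  have vK: "\<bar>v z\<bar> \<le> K" if "z \<in> Z" for z unfolding K_def using that finZ by (intro member_le_sum) auto
  have fbd: "\<bar>f x\<bar> \<le> 1 * norm x + K" for x
  proof -
    obtain z where z: "z \<in> Z" "f x = inner x z - v z"
    proof -
      have "f x \<in> (\<lambda>z. inner x z - v z) ` Z" unfolding f_def using finZ Zne by (intro Max_in) auto
      then show ?thesis using that by auto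
    qed
    have "\<bar>inner x z\<bar> \<le> norm x * norm z" by (rule Cauchy_Schwarz_ineq2)
    also have "\<dots> \<le> norm x" using Z1[OF z(1)] by (simp add: mult_left_le)
    finally show ?thesis using z vK[OF z(1)] by simp
  qed
  have fi\<mu>: "integrable \<mu> f" by (rule bp_integrable_bound[OF \<mu> n\<mu> fm fbd])
  have fi\<nu>: "integrable \<nu> f" by (rule bp_integrable_bound[OF \<nu> n\<nu> fm fbd])
  define V where "V w = (if w \<in> Z then v w else 0)" for w
  have Vm: "V \<in> borel_measurable borel" unfolding V_def[abs_def] by (rule fin_supp_meas[OF finZ])
  define \<Sigma> where "\<Sigma> = (\<Sum>z\<in>Z. v z * bz z)"
  have VT: "integrable \<rho> (\<lambda>y. V (T y))" "integral\<^sup>L \<rho> (\<lambda>y. V (T y)) = \<Sigma>"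
    using int_fin_sum[OF \<rho>b T(1) finZ, of v] unfolding V_def \<Sigma>_def bz_def by auto
  have up: "corr_cost \<mu> \<rho> \<le> integral\<^sup>L \<mu> (\<lambda>x. f x + \<delta> * norm x) + integral\<^sup>L \<rho> (\<lambda>y. V (T y))"
  proof (rule cc_upper[OF \<mu> \<rho> n\<mu>])
    show "integrable \<mu> (\<lambda>x. f x + \<delta> * norm x)" using fi\<mu> n\<mu> by auto
    show "(\<lambda>x. f x + \<delta> * norm x) \<in> borel_measurable borel" using fm by measurable
    show "integrable \<rho> (\<lambda>y. V (T y))" by (rule VT(1))
    show "(\<lambda>y. V (T y)) \<in> borel_measurable borel" using Vm T(1) by measurable
    show "{y. norm y \<le> 1 \<and> T y \<in> Z} \<in> sets borel"
    proof -
      have "{y. norm y \<le> 1 \<and> T y \<in> Z} = {y. norm y \<le> 1} \<inter> T -` Z" by auto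
      moreover have "T -` Z \<in> sets borel"
        using T(1) finZ by (intro measurable_sets_borel[OF T(1)] borel_closed finite_imp_closed)
      moreover have "{y::'a. norm y \<le> 1} \<in> sets borel" by measurable
      ultimately show ?thesis by simp
    qed
    show "AE y in \<rho>. y \<in> {y. norm y \<le> 1 \<and> T y \<in> Z}"
      using prob_unit_ball_AE[OF \<rho>] TZ by eventually_elim auto
    fix x y assume y: "y \<in> {y. norm y \<le> 1 \<and> T y \<in> Z}"
    have "inner x (y - T y) \<le> norm x * norm (y - T y)"
      using Cauchy_Schwarz_ineq2[of x "y - T y"] by linarith
    also have "\<dots> \<le> norm x * \<delta>"
      using T(4)[of y] y by (intro mult_left_mono) (auto simp: norm_minus_commute)
    finally have 1: "inner x (y - T y) \<le> \<delta> * norm x" by (simp add: mult.commute)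
    have 2: "inner x (T y) \<le> f x + V (T y)" using fge[of "T y" x] y by (simp add: V_def)
    have "inner x y = inner x (T y) + inner x (y - T y)" by (simp add: inner_diff_right)
    then show "inner x y \<le> f x + \<delta> * norm x + V (T y)" using 1 2 by simp
  qed
  have up2: "corr_cost \<mu> \<rho> \<le> integral\<^sup>L \<mu> f + \<delta> * E\<mu> + \<Sigma>"
    using up VT(2) fi\<mu> n\<mu> unfolding E\<mu>_def by simp
  obtain \<pi> where \<pi>: "\<pi> \<in> couplings \<nu> \<rho>" "AE p in \<pi>. A (fst p) = T (snd p)"
  proof -
    have eqA: "\<And>z. z \<in> Z \<Longrightarrow> measure \<nu> (A -` {z}) = measure \<rho> (T -` {z})"
      using A(4) unfolding bz_def by simp
    have posT: "\<And>z. z \<in> Z \<Longrightarrow> measure \<rho> (T -` {z}) > 0" using bzpos unfolding bz_def by simp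
    show ?thesis using glue[OF \<nu> \<rho>b A(1) T(1) finZ A(2) TZ eqA posT] that by blast
  qed
  have VA: "integrable \<nu> (\<lambda>x. V (A x))" "integral\<^sup>L \<nu> (\<lambda>x. V (A x)) = \<Sigma>"
    using int_fin_sum[OF \<nu> A(1) finZ, of v] A(4) unfolding V_def \<Sigma>_def by auto
  define h where "h x = inner x (A x) - \<delta> * norm x" for x
  have hm: "h \<in> borel_measurable borel" unfolding h_def[abs_def] using A(1) by measurable
  have heq: "h x = f x + V (A x) - \<delta> * norm x" for x
    unfolding h_def V_def f_def using A(2,3)[of x] by simp
  have hi: "integrable \<nu> h" unfolding heq[abs_def] using fi\<nu> VA(1) n\<nu> by auto
  have hint: "integral\<^sup>L \<nu> h = integral\<^sup>L \<nu> f + \<Sigma> - \<delta> * E\<nu>"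
    unfolding heq[abs_def] E\<nu>_def using fi\<nu> VA n\<nu> by simp
  have "integral\<^sup>L \<nu> h = integral\<^sup>L \<pi> (\<lambda>p. h (fst p))" using cp_integral_fst(1)[OF \<pi>(1) hm] by simp
  also have "\<dots> \<le> integral\<^sup>L \<pi> (\<lambda>(x, y). inner x y)"
  proof (rule integral_mono_AE)
    show "integrable \<pi> (\<lambda>p. h (fst p))" using cp_integral_fst(2)[OF \<pi>(1) hm] hi by simp
    show "integrable \<pi> (\<lambda>(x, y). inner x y)" by (rule cp_value_bound(1)[OF \<pi>(1) \<rho> n\<nu>])
    have "AE p in \<pi>. norm (snd p) \<le> 1"
      by (rule cp_AE_snd[OF \<pi>(1) prob_unit_ball_AE[OF \<rho>]]) auto
    then show "AE p in \<pi>. h (fst p) \<le> (case p of (x, y) \<Rightarrow> inner x y)"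
      using \<pi>(2)
    proof eventually_elim
      case (elim p)
      obtain x y where p: "p = (x, y)" by (cases p)
      have "inner x (y - T y) \<ge> - (norm x * norm (y - T y))"
        using Cauchy_Schwarz_ineq2[of x "y - T y"] by linarith
      moreover have "norm x * norm (y - T y) \<le> norm x * \<delta>"
        using T(4)[of y] elim p by (intro mult_left_mono) (auto simp: norm_minus_commute)
      ultimately have "inner x (y - T y) \<ge> - (\<delta> * norm x)" by (simp add: mult.commute)
      moreover have "inner x y = inner x (T y) + inner x (y - T y)" by (simp add: inner_diff_right)
      moreover have "A x = T y" using elim p by simp
      ultimately show ?case unfolding h_def p by simp
    qed
  qed
  also have "\<dots> \<le> corr_cost \<nu> \<rho>" by (rule corr_cost_bounds(2)[OF \<nu> \<rho> n\<nu> \<pi>(1)])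
  finally have low: "integral\<^sup>L \<nu> f + \<Sigma> - \<delta> * E\<nu> \<le> corr_cost \<nu> \<rho>" using hint by simp
  have "integral\<^sup>L \<nu> f - integral\<^sup>L \<mu> f \<le> corr_cost \<nu> \<rho> - corr_cost \<mu> \<rho> + \<delta> * (E\<mu> + E\<nu>)"
    using low up2 by (simp add: algebra_simps)
  then show ?thesis using f1 \<delta>E by (intro bexI[of _ f]) auto
qed

lemma lip1_bounds:
  fixes \<alpha> :: "'a::euclidean_space measure" and f :: "'a \<Rightarrow> real"
  assumes \<alpha>: "\<alpha> \<in> borel_prob" and n: "integrable \<alpha> norm" and f: "f \<in> convex_lip1"
  shows "integrable \<alpha> f" "f 0 - integral\<^sup>L \<alpha> norm \<le> integral\<^sup>L \<alpha> f" "integral\<^sup>L \<alpha> f \<le> f 0 + integral\<^sup>L \<alpha> norm"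
proof -
  interpret prob_space \<alpha> using \<alpha> by (auto simp: borel_prob_def)
  have lip: "\<And>x x'. \<bar>f x - f x'\<bar> \<le> norm (x - x')" by (rule convex_lip1_lipschitz[OF f])
  have fm: "f \<in> borel_measurable borel" by (rule borel_measurable_continuous_onI[OF lip_cont[OF lip]])
  have bd: "\<bar>f x\<bar> \<le> 1 * norm x + \<bar>f 0\<bar>" for x using lip[of x 0] by simp
  have l0: "f 0 - norm x \<le> f x \<and> f x \<le> f 0 + norm x" for x
  proof -
    have "\<bar>f 0 - f x\<bar> \<le> norm x" using lip[of 0 x] by simp
    then show ?thesis by (simp add: abs_le_iff)
  qed
  show fi: "integrable \<alpha> f" by (rule bp_integrable_bound[OF \<alpha> n fm bd])
  have "integral\<^sup>L \<alpha> (\<lambda>x. f 0 - norm x) \<le> integral\<^sup>L \<alpha> f"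
    using fi n l0 by (intro integral_mono) auto
  then show "f 0 - integral\<^sup>L \<alpha> norm \<le> integral\<^sup>L \<alpha> f" using n by (simp add: prob_space)
  have "integral\<^sup>L \<alpha> f \<le> integral\<^sup>L \<alpha> (\<lambda>x. f 0 + norm x)"
    using fi n l0 by (intro integral_mono) auto
  then show "integral\<^sup>L \<alpha> f \<le> f 0 + integral\<^sup>L \<alpha> norm" using n by (simp add: prob_space)
qed

theorem proposition1:
  fixes \<mu> \<nu> :: "'a::euclidean_space measure"
  assumes "\<mu> \<in> borel_prob" and "\<nu> \<in> borel_prob"
    and "integrable \<mu> (\<lambda>x. norm x)" and "integrable \<nu> (\<lambda>x. norm x)"
    and "absolutely_continuous lborel \<mu>" and "absolutely_continuous \<mu> lborel"
    and "absolutely_continuous lborel \<nu>" and "absolutely_continuous \<nu> lborel"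
  shows "(INF f\<in>convex_lip1. (\<integral>x. f x \<partial>\<nu>) - (\<integral>x. f x \<partial>\<mu>))
       = (INF \<rho>\<in>prob_unit_ball. corr_cost \<nu> \<rho> - corr_cost \<mu> \<rho>)"
proof -
  have \<mu>: "\<mu> \<in> borel_prob" and \<nu>: "\<nu> \<in> borel_prob" using assms by auto
  have n\<mu>: "integrable \<mu> norm" and n\<nu>: "integrable \<nu> norm" using assms(3,4) by auto
  have ac: "absolutely_continuous lborel \<nu>" by fact
  define val where "val f = (\<integral>x. f x \<partial>\<nu>) - (\<integral>x. f x \<partial>\<mu>)" for f :: "'a \<Rightarrow> real"
  define cc where "cc \<rho> = corr_cost \<nu> \<rho> - corr_cost \<mu> \<rho>" for \<rho>
  have f0: "(\<lambda>x::'a. Max ((\<lambda>z. inner x z - 0) ` {0})) \<in> convex_lip1"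
    by (rule max_affine_lip1) auto
  then have ne1: "convex_lip1 \<noteq> ({} :: ('a \<Rightarrow> real) set)" by auto
  obtain \<rho>0 :: "'a measure" where "\<rho>0 \<in> prob_unit_ball"
    using partA[OF \<mu> \<nu> n\<mu> n\<nu> f0, of 1] by auto
  then have ne2: "prob_unit_ball \<noteq> ({} :: 'a measure set)" by auto
  have bdd1: "bdd_below (val ` convex_lip1)"
  proof (rule bdd_belowI[of _ "- (integral\<^sup>L \<nu> norm + integral\<^sup>L \<mu> norm)"])
    fix r assume "r \<in> val ` convex_lip1"
    then obtain f :: "'a \<Rightarrow> real" where f: "f \<in> convex_lip1" "r = val f" by auto
    show "- (integral\<^sup>L \<nu> norm + integral\<^sup>L \<mu> norm) \<le> r"
      using lip1_bounds[OF \<nu> n\<nu> f(1)] lip1_bounds[OF \<mu> n\<mu> f(1)] f(2) unfolding val_def by simp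
  qed
  have bdd2: "bdd_below (cc ` prob_unit_ball)"
  proof (rule bdd_belowI[of _ "- (integral\<^sup>L \<nu> norm + integral\<^sup>L \<mu> norm)"])
    fix r assume "r \<in> cc ` prob_unit_ball"
    then obtain \<rho> :: "'a measure" where \<rho>: "\<rho> \<in> prob_unit_ball" "r = cc \<rho>" by auto
    show "- (integral\<^sup>L \<nu> norm + integral\<^sup>L \<mu> norm) \<le> r"
      using corr_cost_bounds(3)[OF \<nu> \<rho>(1) n\<nu>] corr_cost_bounds(1)[OF \<mu> \<rho>(1) n\<mu>] \<rho>(2)
      unfolding cc_def by simp
  qed
  have "(INF f\<in>convex_lip1. val f) \<le> (INF \<rho>\<in>prob_unit_ball. cc \<rho>)"
  proof (rule cINF_greatest[OF ne2])
    fix \<rho> :: "'a measure" assume \<rho>: "\<rho> \<in> prob_unit_ball"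
    show "(INF f\<in>convex_lip1. val f) \<le> cc \<rho>"
    proof (rule field_le_epsilon)
      fix e :: real assume e: "0 < e"
      obtain f :: "'a \<Rightarrow> real" where f: "f \<in> convex_lip1" "val f \<le> cc \<rho> + e"
        using partB[OF \<mu> \<nu> n\<mu> n\<nu> ac \<rho> e] unfolding val_def cc_def by auto
      have "(INF f\<in>convex_lip1. val f) \<le> val f" by (rule cINF_lower[OF bdd1 f(1)])
      then show "(INF f\<in>convex_lip1. val f) \<le> cc \<rho> + e" using f(2) by simp
    qed
  qed
  moreover have "(INF \<rho>\<in>prob_unit_ball. cc \<rho>) \<le> (INF f\<in>convex_lip1. val f)"
  proof (rule cINF_greatest[OF ne1])
    fix f :: "'a \<Rightarrow> real" assume f: "f \<in> convex_lip1"
    show "(INF \<rho>\<in>prob_unit_ball. cc \<rho>) \<le> val f"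
    proof (rule field_le_epsilon)
      fix e :: real assume e: "0 < e"
      obtain \<rho> :: "'a measure" where \<rho>: "\<rho> \<in> prob_unit_ball" "cc \<rho> \<le> val f + e"
        using partA[OF \<mu> \<nu> n\<mu> n\<nu> f e] unfolding val_def cc_def by auto
      have "(INF \<rho>\<in>prob_unit_ball. cc \<rho>) \<le> cc \<rho>" by (rule cINF_lower[OF bdd2 \<rho>(1)])
      then show "(INF \<rho>\<in>prob_unit_ball. cc \<rho>) \<le> val f + e" using \<rho>(2) by simp
    qed
  qed
  ultimately have "(INF f\<in>convex_lip1. val f) = (INF \<rho>\<in>prob_unit_ball. cc \<rho>)" by (rule antisym)
  then show ?thesis unfolding val_def cc_def .
qed

end
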